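(* Let $\bm L=(L_1,\dots,L_r)$ be linear functionals on complex Laurent polynomials with $L_j[w^k]=L_j[w^{-k}]$ for all $k\in\mathbb N$, let $M_j[x^k]=L_j[(w+w^{-1})^k]$ define functionals $M_j$ on polynomials, and suppose $(\bm n;\bm n)$ and $(\bm n+\bm e_j;\bm n)$ are normal for $\bm L$ for all $\bm n\in\mathbb N^r$ and all $j$ (so that $\bm M=(M_1,\dots,M_r)$ is perfect). Let $a_{\bm n,j},b_{\bm n,j}$ be the nearest neighbour recurrence coefficients of $\bm M$. Then for every $\bm n\in\mathbb N^r$ and $j$ with $n_j\ge1$, $$a_{\bm n,j}=\frac{(1+\alpha_{\bm n-\bm e_j;\bm n-\bm e_j})(1-\alpha_{\bm n-\bm e_j;\bm n}^2)\rho_{\bm n;\bm n,j}}{1+\alpha_{\bm n;\bm n}},$$ $$b_{\bm n,j}=\sum_{\ell\ne j}\rho_{\bm n;\bm n,\ell}\gamma^{\ell j}_{\bm n;\bm n}+\alpha_{\bm n;\bm n-\bm e_j}-\alpha_{\bm n+\bm e_j;\bm n}-\alpha_{\bm n;\bm n}\alpha_{\bm n-\bm e_j;\bm n}-\alpha_{\bm n;\bm n}\alpha_{\bm n+\bm e_j;\bm n}.$$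
   Context: Fix $r\ge1$; $\mathbb N=\{0,1,2,\dots\}$; $\bm e_j$ the $j$-th standard unit vector; for $\bm v\in\mathbb Z^r$, $|\bm v|=v_1+\dots+v_r$ (signed). Let $c_{k,j}=L_j[w^{-k}]$. $\mathfrak C_{2r}=\{(\bm n;\bm m)\in\mathbb Z^r\times\mathbb Z^r:n_j+m_j\ge0\ \forall j\}$. For $(\bm n;\bm m)\in\mathfrak C_{2r}$, $\bm n\ne-\bm m$, $T_{\bm n;\bm m}$ is the square matrix of size $|\bm n|+|\bm m|$ with rows indexed by $(j,k)$, $1\le j\le r$, $-m_j\le k\le n_j-1$ (ordered by $j$, then increasing $k$), columns indexed by $i=-|\bm m|,\dots,|\bm n|-1$, entries $c_{k-i,j}$; $T_{\bm n;-\bm n}:=1$; normal means $\det T_{\bm n;\bm m}\ne0$. (Under the symmetry $L_j[w^k]=L_j[w^{-k}]$, $(\bm n;\bm m)$ is normal iff $(\bm m;\bm n)$ is.) For normal $(\bm n;\bm m)$, $\bm n\ne-\bm m$: $\Phi_{\bm n;\bm m}$ is the unique Laurent polynomial in $\operatorname{span}\{z^k\}_{k=-|\bm m|}^{|\bm n|}$ with $z^{|\bm n|}$-coefficient $1$ and $L_j[\Phi_{\bm n;\bm m}(w)w^{-k}]=0$ for $-m_j\le k\le n_j-1$, all $j$; $\Phi_{\bm n;-\bm n}=1$; $\alpha_{\bm n;\bm m}$ := $z^{-|\bm m|}$-coefficient of $\Phi_{\bm n;\bm m}$. $\rho_{\bm n;\bm m,\ell}=L_\ell[\Phi_{\bm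 n;\bm m}(w)w^{-n_\ell}]/L_\ell[\Phi_{\bm n-\bm e_\ell;\bm m}(w)w^{-n_\ell+1}]$ if $(\bm n-\bm e_\ell;\bm m)\in\mathfrak C_{2r}$, and $\rho_{\bm n;\bm m,\ell}=0$ otherwise. For $\ell\ne j$: $\gamma^{\ell j}_{\bm n;\bm m}=L_j[\Phi_{\bm n+\bm e_\ell;\bm m}(w)w^{-n_j}]/L_j[\Phi_{\bm n;\bm m}(w)w^{-n_j}]$, i.e. the number with $\Phi_{\bm n+\bm e_\ell;\bm m}-\Phi_{\bm n+\bm e_j;\bm m}=\gamma^{\ell j}_{\bm n;\bm m}\Phi_{\bm n;\bm m}$. For $\bm n\in\mathbb N^r$, $P_{\bm n}$ denotes the unique monic polynomial of degree $|\bm n|$ with $M_j[P_{\bm n}(x)x^k]=0$ for $0\le k\le n_j-1$, all $j$ (put $P_{\bm n-\bm e_j}:=0$ if $n_j=0$). The nearest neighbour recurrence coefficients are the complex numbers $a_{\bm n,j},b_{\bm n,k}$ such that $xP_{\bm n}(x)=P_{\bm n+\bm e_k}(x)+b_{\bm n,k}P_{\bm n}(x)+\sum_{j=1}^ra_{\bm n,j}P_{\bm n-\bm e_j}(x)$ for all $\bm n\in\mathbb N^r$ and $k=1,\dots,r$. *)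

theory Defs
  imports "Jordan_Normal_Form.Determinant" "HOL-Computational_Algebra.Polynomial"
begin

text \<open>Multi-indices are functions nat => int; only the components j < r matter
  (index j here corresponds to index j+1 in the paper).
  A family of functionals L_0..L_(r-1) on complex Laurent polynomials is given by its
  moments: mom j k = L_j[w^k] (k :: int).  Laurent polynomials are finitely supported
  coefficient functions int => complex.\<close>

definition msum :: "nat \<Rightarrow> (nat \<Rightarrow> int) \<Rightarrow> int" where
  "msum r n = (\<Sum>j<r. n j)"

definition unitv :: "nat \<Rightarrow> nat \<Rightarrow> int" where
  "unitv j = (\<lambda>i. if i = j then 1 else 0)"

definition madd :: "(nat \<Rightarrow> int) \<Rightarrow> (nat \<Rightarrow> int) \<Rightarrow> nat \<Rightarrow> int" where
  "madd n m = (\<lambda>i. n i + m i)"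

definition msub :: "(nat \<Rightarrow> int) \<Rightarrow> (nat \<Rightarrow> int) \<Rightarrow> nat \<Rightarrow> int" where
  "msub n m = (\<lambda>i. n i - m i)"

definition lsupp :: "(int \<Rightarrow> complex) \<Rightarrow> int set" where
  "lsupp p = {k. p k \<noteq> 0}"

definition Lfun :: "(nat \<Rightarrow> int \<Rightarrow> complex) \<Rightarrow> nat \<Rightarrow> (int \<Rightarrow> complex) \<Rightarrow> complex" where
  "Lfun mom j p = (\<Sum>k\<in>lsupp p. p k * mom j k)"

definition lshift :: "(int \<Rightarrow> complex) \<Rightarrow> int \<Rightarrow> (int \<Rightarrow> complex)" where
  "lshift p s = (\<lambda>k. p (k - s))"

definition lmult :: "(int \<Rightarrow> complex) \<Rightarrow> (int \<Rightarrow> complex) \<Rightarrow> (int \<Rightarrow> complex)" where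
  "lmult p q = (\<lambda>k. \<Sum>i\<in>lsupp p. p i * q (k - i))"

definition lone :: "int \<Rightarrow> complex" where
  "lone = (\<lambda>k. if k = 0 then 1 else 0)"

definition wpw :: "int \<Rightarrow> complex" where
  "wpw = (\<lambda>k. if k = 1 \<or> k = -1 then 1 else 0)"

fun lpow :: "(int \<Rightarrow> complex) \<Rightarrow> nat \<Rightarrow> (int \<Rightarrow> complex)" where
  "lpow p 0 = lone"
| "lpow p (Suc i) = lmult p (lpow p i)"

definition Trows :: "nat \<Rightarrow> (nat \<Rightarrow> int) \<Rightarrow> (nat \<Rightarrow> int) \<Rightarrow> (nat \<times> int) list" where
  "Trows r n m = concat (map (\<lambda>j. map (\<lambda>k. (j, k)) [- m j .. n j - 1]) [0..<r])"

definition Tmat :: "nat \<Rightarrow> (nat \<Rightarrow> int \<Rightarrow> complex) \<Rightarrow> (nat \<Rightarrow> int) \<Rightarrow> (nat \<Rightarrow> int) \<Rightarrow> complex mat" where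
  "Tmat r mom n m = mat (nat (msum r n + msum r m)) (nat (msum r n + msum r m))
     (\<lambda>(t, s). let jk = Trows r n m ! t; i = - msum r m + int s
              in mom (fst jk) (i - snd jk))"

definition normal :: "nat \<Rightarrow> (nat \<Rightarrow> int \<Rightarrow> complex) \<Rightarrow> (nat \<Rightarrow> int) \<Rightarrow> (nat \<Rightarrow> int) \<Rightarrow> bool" where
  "normal r mom n m = (if (\<forall>j<r. n j = - m j) then True else det (Tmat r mom n m) \<noteq> 0)"

definition Phi :: "nat \<Rightarrow> (nat \<Rightarrow> int \<Rightarrow> complex) \<Rightarrow> (nat \<Rightarrow> int) \<Rightarrow> (nat \<Rightarrow> int) \<Rightarrow> (int \<Rightarrow> complex)" where
  "Phi r mom n m = (if (\<forall>j<r. n j = - m j) then lone else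
     (THE p. (\<forall>k. p k \<noteq> 0 \<longrightarrow> - msum r m \<le> k \<and> k \<le> msum r n)
           \<and> p (msum r n) = 1
           \<and> (\<forall>j<r. \<forall>k. - m j \<le> k \<and> k \<le> n j - 1 \<longrightarrow> Lfun mom j (lshift p (- k)) = 0)))"

definition alpha :: "nat \<Rightarrow> (nat \<Rightarrow> int \<Rightarrow> complex) \<Rightarrow> (nat \<Rightarrow> int) \<Rightarrow> (nat \<Rightarrow> int) \<Rightarrow> complex" where
  "alpha r mom n m = Phi r mom n m (- msum r m)"

definition rho :: "nat \<Rightarrow> (nat \<Rightarrow> int \<Rightarrow> complex) \<Rightarrow> (nat \<Rightarrow> int) \<Rightarrow> (nat \<Rightarrow> int) \<Rightarrow> nat \<Rightarrow> complex" where
  "rho r mom n m l = (if (\<forall>j<r. (msub n (unitv l)) j + m j \<ge> 0)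
     then Lfun mom l (lshift (Phi r mom n m) (- n l))
          / Lfun mom l (lshift (Phi r mom (msub n (unitv l)) m) (- n l + 1))
     else 0)"

definition gamma :: "nat \<Rightarrow> (nat \<Rightarrow> int \<Rightarrow> complex) \<Rightarrow> (nat \<Rightarrow> int) \<Rightarrow> (nat \<Rightarrow> int) \<Rightarrow> nat \<Rightarrow> nat \<Rightarrow> complex" where
  "gamma r mom n m l j =
     Lfun mom j (lshift (Phi r mom (madd n (unitv l)) m) (- n j))
     / Lfun mom j (lshift (Phi r mom n m) (- n j))"

definition Mfun :: "(nat \<Rightarrow> int \<Rightarrow> complex) \<Rightarrow> nat \<Rightarrow> complex poly \<Rightarrow> complex" where
  "Mfun mom j p = (\<Sum>i\<le>degree p. coeff p i * Lfun mom j (lpow wpw i))"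

definition Pn :: "nat \<Rightarrow> (nat \<Rightarrow> int \<Rightarrow> complex) \<Rightarrow> (nat \<Rightarrow> int) \<Rightarrow> complex poly" where
  "Pn r mom n = (THE P. degree P = nat (msum r n) \<and> lead_coeff P = 1
     \<and> (\<forall>j<r. \<forall>k::nat. int k < n j \<longrightarrow> Mfun mom j (P * monom 1 k) = 0))"

text \<open>Convention P_{n - e_j} := 0 if n_j = 0 (i.e. P of a non-natural multi-index is 0).\<close>
definition Pm :: "nat \<Rightarrow> (nat \<Rightarrow> int \<Rightarrow> complex) \<Rightarrow> (nat \<Rightarrow> int) \<Rightarrow> complex poly" where
  "Pm r mom n = (if (\<forall>j<r. 0 \<le> n j) then Pn r mom n else 0)"

end

theory Submission
  imports Defs
begin

definition suppin :: "(int \<Rightarrow> complex) \<Rightarrow> int \<Rightarrow> int \<Rightarrow> bool" where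
  "suppin p a b \<longleftrightarrow> (\<forall>k. p k \<noteq> 0 \<longrightarrow> a \<le> k \<and> k \<le> b)"

definition LL :: "(nat \<Rightarrow> int \<Rightarrow> complex) \<Rightarrow> nat \<Rightarrow> (int \<Rightarrow> complex) \<Rightarrow> int \<Rightarrow> complex" where
  "LL mom j p s = Lfun mom j (lshift p s)"

definition lrefl :: "(int \<Rightarrow> complex) \<Rightarrow> int \<Rightarrow> complex" where
  "lrefl p = (\<lambda>k. p (- k))"

lemma Lfun_sum: assumes "finite A" "lsupp p \<subseteq> A"
  shows "Lfun mom j p = (\<Sum>k\<in>A. p k * mom j k)"
  unfolding Lfun_def by (rule sum.mono_neutral_left) (use assms in \<open>auto simp: lsupp_def\<close>)

lemma LL_sum: assumes "suppin p a b"
  shows "LL mom j p s = (\<Sum>k\<in>{a..b}. p k * mom j (k + s))"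
proof -
  have "LL mom j p s = (\<Sum>t\<in>(\<lambda>k. k + s) ` {a..b}. lshift p s t * mom j t)"
    unfolding LL_def
    by (rule Lfun_sum) (use assms in \<open>auto simp: lsupp_def lshift_def suppin_def image_iff intro!: bexI[of _ "x - s" for x]\<close>)
  also have "\<dots> = (\<Sum>k\<in>{a..b}. p k * mom j (k + s))"
    by (subst sum.reindex) (auto simp: inj_on_def lshift_def)
  finally show ?thesis .
qed

lemma suppin_mono: "suppin p a b \<Longrightarrow> a' \<le> a \<Longrightarrow> b \<le> b' \<Longrightarrow> suppin p a' b'"
  unfolding suppin_def by force

lemma LL_sum': assumes "suppin p a b" "a' \<le> a" "b \<le> b'"
  shows "LL mom j p s = (\<Sum>k\<in>{a'..b'}. p k * mom j (k + s))"
  using LL_sum[OF suppin_mono[OF assms]] .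

lemma LL_lshift: "LL mom j (lshift p t) s = LL mom j p (s + t)"
  unfolding LL_def lshift_def by (simp add: algebra_simps)

lemma suppin_lshift: "suppin p a b \<Longrightarrow> suppin (lshift p t) (a + t) (b + t)"
  unfolding suppin_def lshift_def by force

lemma suppin_refl: "suppin p a b \<Longrightarrow> suppin (lrefl p) (- b) (- a)"
  unfolding suppin_def lrefl_def by force

lemma suppin_add: "suppin p a b \<Longrightarrow> suppin q a b \<Longrightarrow> suppin (\<lambda>k. c * p k + d * q k) a b"
  unfolding suppin_def by force

lemma suppin_lin: "suppin p a b \<Longrightarrow> suppin (\<lambda>k. c * p k) a b"
  unfolding suppin_def by force

lemma suppin_sum: "finite I \<Longrightarrow> (\<And>i. i \<in> I \<Longrightarrow> suppin (f i) a b) \<Longrightarrow> suppin (\<lambda>k. \<Sum>i\<in>I. f i k) a b"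
  unfolding suppin_def by (metis (mono_tags, lifting) sum.neutral)

lemma LL_lin2: assumes "suppin p a b" "suppin q a b"
  shows "LL mom j (\<lambda>k. c * p k + d * q k) s = c * LL mom j p s + d * LL mom j q s"
  using assms suppin_add[OF assms, of c d]
  by (simp add: LL_sum sum_distrib_left sum.distrib algebra_simps)

lemma LL_sum_fun: assumes "finite I" "\<And>i. i \<in> I \<Longrightarrow> suppin (f i) a b"
  shows "LL mom j (\<lambda>k. \<Sum>i\<in>I. c i * f i k) s = (\<Sum>i\<in>I. c i * LL mom j (f i) s)"
proof -
  have s: "suppin (\<lambda>k. \<Sum>i\<in>I. c i * f i k) a b"
    by (rule suppin_sum) (use assms suppin_lin in auto)
  have "(\<Sum>i\<in>I. c i * LL mom j (f i) s) = (\<Sum>i\<in>I. c i * (\<Sum>k\<in>{a..b}. f i k * mom j (k + s)))"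
    by (rule sum.cong) (use assms LL_sum in auto)
  then show ?thesis
    using assms s by (simp add: LL_sum sum_distrib_left sum_distrib_right mult.assoc sum.swap[of _ I])
qed

lemma mom_sym_int: assumes "\<forall>k::nat. f (int k) = (f (- int k) :: complex)"
  shows "f (- k) = f k"
proof (cases "k \<ge> 0")
  case True then show ?thesis using assms[rule_format, of "nat k"] by simp
next
  case False then show ?thesis using assms[rule_format, of "nat (-k)"] by simp
qed

lemma LL_refl: assumes "\<forall>k::nat. mom j (int k) = mom j (- int k)" "suppin p a b"
  shows "LL mom j (lrefl p) s = LL mom j p (- s)"
proof -
  have "LL mom j (lrefl p) s = (\<Sum>k\<in>{-b..-a}. p (-k) * mom j (k + s))"
    using LL_sum[OF suppin_refl[OF assms(2)]] by (simp add: lrefl_def)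
  also have "\<dots> = (\<Sum>k\<in>{a..b}. p k * mom j (-k + s))"
    by (rule sum.reindex_bij_witness[of _ uminus uminus]) auto
  also have "\<dots> = (\<Sum>k\<in>{a..b}. p k * mom j (k + - s))"
    using mom_sym_int[OF assms(1), of "-k + s" for k] by (simp add: algebra_simps)
  also have "\<dots> = LL mom j p (- s)" using LL_sum[OF assms(2)] by simp
  finally show ?thesis .
qed

definition orthc :: "nat \<Rightarrow> (nat \<Rightarrow> int \<Rightarrow> complex) \<Rightarrow> (nat \<Rightarrow> int) \<Rightarrow> (nat \<Rightarrow> int) \<Rightarrow> (int \<Rightarrow> complex) \<Rightarrow> bool" where
  "orthc r mom n m p \<longleftrightarrow> (\<forall>l<r. \<forall>k. - m l \<le> k \<and> k \<le> n l - 1 \<longrightarrow> LL mom l p (- k) = 0)"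

definition PhiP :: "nat \<Rightarrow> (nat \<Rightarrow> int \<Rightarrow> complex) \<Rightarrow> (nat \<Rightarrow> int) \<Rightarrow> (nat \<Rightarrow> int) \<Rightarrow> (int \<Rightarrow> complex) \<Rightarrow> bool" where
  "PhiP r mom n m p \<longleftrightarrow> suppin p (- msum r m) (msum r n) \<and> p (msum r n) = 1 \<and> orthc r mom n m p"

definition KER :: "nat \<Rightarrow> (nat \<Rightarrow> int \<Rightarrow> complex) \<Rightarrow> (nat \<Rightarrow> int) \<Rightarrow> (nat \<Rightarrow> int) \<Rightarrow> bool" where
  "KER r mom n m \<longleftrightarrow> (\<forall>p. suppin p (- msum r m) (msum r n - 1) \<and> orthc r mom n m p \<longrightarrow> p = (\<lambda>_. 0))"

definition inC :: "nat \<Rightarrow> (nat \<Rightarrow> int) \<Rightarrow> (nat \<Rightarrow> int) \<Rightarrow> bool" where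
  "inC r n m \<longleftrightarrow> (\<forall>l<r. 0 \<le> n l + m l)"

lemma length_Trows: assumes "inC r n m"
  shows "length (Trows r n m) = nat (msum r n + msum r m)"
proof -
  have "length (Trows r n m) = (\<Sum>j\<leftarrow>[0..<r]. nat (n j + m j))"
    unfolding Trows_def by (simp add: length_concat o_def algebra_simps)
  also have "\<dots> = (\<Sum>j<r. nat (n j + m j))"
    by (simp add: sum_list_distinct_conv_sum_set atLeast0LessThan)
  also have "int \<dots> = (\<Sum>j<r. n j + m j)"
    using assms by (simp add: inC_def)
  finally show ?thesis by (simp add: msum_def sum.distrib)
qed

lemma set_Trows: "set (Trows r n m) = {(j, k). j < r \<and> - m j \<le> k \<and> k \<le> n j - 1}"
  unfolding Trows_def by auto

lemma Tmat_apply: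
  assumes C: "inC r n m" and t: "t < nat (msum r n + msum r m)"
    and rt: "Trows r n m ! t = (l, k)"
    and sp: "suppin p (- msum r m) (msum r n - 1)"
  shows "(Tmat r mom n m *\<^sub>v vec (nat (msum r n + msum r m)) (\<lambda>s. p (- msum r m + int s))) $ t
         = LL mom l p (- k)"
proof -
  let ?D = "nat (msum r n + msum r m)"
  have "(Tmat r mom n m *\<^sub>v vec ?D (\<lambda>s. p (- msum r m + int s))) $ t
        = (\<Sum>s\<in>{0..<?D}. mom l ((- msum r m + int s) - k) * p (- msum r m + int s))"
    using t rt by (simp add: Tmat_def scalar_prod_def Let_def)
  also have "\<dots> = (\<Sum>i\<in>{- msum r m..msum r n - 1}. p i * mom l (i + - k))"
    by (rule sum.reindex_bij_witness[of _ "\<lambda>i. nat (i + msum r m)" "\<lambda>s. - msum r m + int s"])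
       (auto simp: algebra_simps)
  also have "\<dots> = LL mom l p (- k)" using LL_sum[OF sp] by simp
  finally show ?thesis .
qed

lemma det_KER:
  assumes C: "inC r n m" and d: "det (Tmat r mom n m) \<noteq> 0"
  shows "KER r mom n m"
  unfolding KER_def
proof (intro allI impI)
  fix p assume a: "suppin p (- msum r m) (msum r n - 1) \<and> orthc r mom n m p"
  let ?D = "nat (msum r n + msum r m)"
  let ?v = "vec ?D (\<lambda>s. p (- msum r m + int s))"
  have car: "Tmat r mom n m \<in> carrier_mat ?D ?D" by (simp add: Tmat_def)
  have "Tmat r mom n m *\<^sub>v ?v = 0\<^sub>v ?D"
  proof (rule eq_vecI)
    fix t assume "t < dim_vec (0\<^sub>v ?D :: complex vec)"
    then have t: "t < ?D" by simp
    obtain l k where rt: "Trows r n m ! t = (l, k)" by fastforce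
    have "(l, k) \<in> set (Trows r n m)" using t rt length_Trows[OF C] by (metis nth_mem)
    then have lk: "l < r" "- m l \<le> k" "k \<le> n l - 1" by (auto simp: set_Trows)
    show "(Tmat r mom n m *\<^sub>v ?v) $ t = 0\<^sub>v ?D $ t"
      using Tmat_apply[OF C t rt] a lk t unfolding orthc_def by auto
  qed (simp add: Tmat_def)
  moreover have "?v \<in> carrier_vec ?D" by simp
  ultimately have v0: "?v = 0\<^sub>v ?D"
    using d det_0_iff_vec_prod_zero[OF car] by blast
  show "p = (\<lambda>_. 0)"
  proof
    fix i
    show "p i = 0"
    proof (cases "- msum r m \<le> i \<and> i \<le> msum r n - 1")
      case True
      then have "nat (i + msum r m) < ?D" by auto
      then have "?v $ nat (i + msum r m) = 0" using v0 by simp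
      then show ?thesis using True by simp
    next
      case False then show ?thesis using a unfolding suppin_def by auto
    qed
  qed
qed

lemma det_EX:
  assumes C: "inC r n m" and d: "det (Tmat r mom n m) \<noteq> 0"
  shows "\<exists>p. PhiP r mom n m p"
proof -
  let ?D = "nat (msum r n + msum r m)"
  let ?A = "Tmat r mom n m"
  have car: "?A \<in> carrier_mat ?D ?D" by (simp add: Tmat_def)
  from det_non_zero_imp_unit[OF car d, of "()"]
  obtain B where B: "B \<in> carrier_mat ?D ?D" "?A * B = 1\<^sub>m ?D"
    unfolding Units_def ring_mat_def by auto
  define bv where "bv = vec ?D (\<lambda>t. - mom (fst (Trows r n m ! t)) (msum r n - snd (Trows r n m ! t)))"
  define v where "v = B *\<^sub>v bv"
  have v: "v \<in> carrier_vec ?D" using B by (simp add: v_def bv_def)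
  have Av: "?A *\<^sub>v v = bv"
    unfolding v_def using B car by (simp add: bv_def assoc_mult_mat_vec[symmetric])
  define q where "q = (\<lambda>i. if - msum r m \<le> i \<and> i \<le> msum r n - 1 then v $ nat (i + msum r m) else 0)"
  define p where "p = (\<lambda>i. if i = msum r n then 1 else q i)"
  have sq: "suppin q (- msum r m) (msum r n - 1)" unfolding suppin_def q_def by auto
  have vq: "vec ?D (\<lambda>s. q (- msum r m + int s)) = v"
  proof (rule eq_vecI)
    fix s assume "s < dim_vec v"
    then have "s < ?D" using v by simp
    then show "vec ?D (\<lambda>s. q (- msum r m + int s)) $ s = v $ s" by (simp add: q_def)
  qed (use v in simp)
  have Cn: "0 \<le> msum r n + msum r m" using C unfolding inC_def msum_def
    by (simp add: sum.distrib[symmetric]) (intro sum_nonneg, auto)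
  have sp: "suppin p (- msum r m) (msum r n)" unfolding suppin_def
  proof (intro allI impI)
    fix k assume "p k \<noteq> 0"
    then have "k = msum r n \<or> (- msum r m \<le> k \<and> k \<le> msum r n - 1)"
      unfolding p_def q_def by (auto split: if_splits)
    then show "- msum r m \<le> k \<and> k \<le> msum r n" using Cn by auto
  qed
  have "orthc r mom n m p"
    unfolding orthc_def
  proof (intro allI impI)
    fix l k assume lk: "l < r" "- m l \<le> k \<and> k \<le> n l - 1"
    then have "(l, k) \<in> set (Trows r n m)" by (simp add: set_Trows)
    then obtain t where t: "t < length (Trows r n m)" "Trows r n m ! t = (l, k)"
      by (metis in_set_conv_nth)
    have t': "t < ?D" using t length_Trows[OF C] by simp
    have "LL mom l p (- k) = (\<Sum>i\<in>{- msum r m..msum r n}. p i * mom l (i + - k))"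
      by (rule LL_sum[OF sp])
    also have "\<dots> = (\<Sum>i\<in>{- msum r m..msum r n - 1}. q i * mom l (i + - k)) + mom l (msum r n - k)"
    proof -
      have e: "{- msum r m..msum r n} = insert (msum r n) {- msum r m..msum r n - 1}" using Cn by auto
      show ?thesis unfolding e by (subst sum.insert) (auto simp: p_def intro!: sum.cong)
    qed
    also have "(\<Sum>i\<in>{- msum r m..msum r n - 1}. q i * mom l (i + - k)) = LL mom l q (- k)"
      using LL_sum[OF sq] by simp
    also have "\<dots> = (?A *\<^sub>v v) $ t" using Tmat_apply[OF C t' t(2) sq] vq by simp
    also have "\<dots> = - mom l (msum r n - k)" using Av t' t(2) by (simp add: bv_def)
    finally show "LL mom l p (- k) = 0" by simp
  qed
  moreover have "p (msum r n) = 1" by (simp add: p_def)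
  ultimately show ?thesis using sp unfolding PhiP_def by blast
qed

lemma orthc_lin2: assumes "orthc r mom n m p" "orthc r mom n m q" "suppin p a b" "suppin q a b"
  shows "orthc r mom n m (\<lambda>k. c * p k + d * q k)"
  using assms unfolding orthc_def by (simp add: LL_lin2)

lemma KER_unique:
  assumes K: "KER r mom n m" and p: "PhiP r mom n m p" and q: "PhiP r mom n m q"
  shows "p = q"
proof -
  let ?d = "\<lambda>k. 1 * p k + (-1) * q k"
  have sp: "suppin p (- msum r m) (msum r n)" and sq: "suppin q (- msum r m) (msum r n)"
    using p q by (auto simp: PhiP_def)
  have "suppin ?d (- msum r m) (msum r n - 1)"
    unfolding suppin_def
  proof (intro allI impI)
    fix k assume k: "1 * p k + (-1) * q k \<noteq> 0"
    have "p (msum r n) = 1" "q (msum r n) = 1" using p q by (auto simp: PhiP_def)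
    then have "k \<noteq> msum r n" using k by auto
    moreover have "p k \<noteq> 0 \<or> q k \<noteq> 0" using k by auto
    ultimately show "- msum r m \<le> k \<and> k \<le> msum r n - 1"
      using sp sq unfolding suppin_def by force
  qed
  moreover have "orthc r mom n m ?d"
    by (rule orthc_lin2) (use p q sp sq in \<open>auto simp: PhiP_def\<close>)
  ultimately have "?d = (\<lambda>_. 0)" using K unfolding KER_def by blast
  then show ?thesis by (auto simp: fun_eq_iff dest: fun_cong)
qed

lemma Phi_char:
  assumes K: "KER r mom n m" and p: "PhiP r mom n m p" and nd: "\<not> (\<forall>j<r. n j = - m j)"
  shows "Phi r mom n m = p"
proof -
  have "(THE p. PhiP r mom n m p) = p"
    using KER_unique[OF K] p by blast
  moreover have "Phi r mom n m = (THE p. PhiP r mom n m p)"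
    using nd unfolding Phi_def PhiP_def suppin_def orthc_def LL_def by auto
  ultimately show ?thesis by simp
qed

definition Xop :: "(int \<Rightarrow> complex) \<Rightarrow> int \<Rightarrow> complex" where
  "Xop q = (\<lambda>k. q (k - 1) + q (k + 1))"

definition ev :: "complex poly \<Rightarrow> int \<Rightarrow> complex" where
  "ev Q = (\<lambda>k. \<Sum>i\<le>degree Q. coeff Q i * lpow wpw i k)"

lemma lsupp_wpw: "lsupp wpw = {1, -1}"
  unfolding lsupp_def wpw_def by auto

lemma lmult_wpw[simp]: "lmult wpw q = Xop q"
proof
  fix k
  have "lmult wpw q k = (\<Sum>i\<in>{1, -1}. wpw i * q (k - i))"
    unfolding lmult_def lsupp_wpw ..
  also have "\<dots> = Xop q k" by (simp add: wpw_def Xop_def)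
  finally show "lmult wpw q k = Xop q k" .
qed

lemma lpow_Suc: "lpow wpw (Suc i) = Xop (lpow wpw i)"
  by simp

lemma suppin_Xop: "suppin q a b \<Longrightarrow> suppin (Xop q) (a - 1) (b + 1)"
  unfolding suppin_def Xop_def by (metis add.commute add_0 diff_add_cancel le_diff_eq zle_add1_eq_le le_less)

lemma suppin_lpow: "suppin (lpow wpw i) (- int i) (int i)"
proof (induction i)
  case 0 then show ?case by (simp add: suppin_def lone_def)
next
  case (Suc i) then show ?case using suppin_mono[OF suppin_Xop[OF Suc]] by (simp add: lpow_Suc)
qed

lemma lpow_refl: "lpow wpw i (- k) = lpow wpw i k"
proof (induction i arbitrary: k)
  case 0 then show ?case by (simp add: lone_def)
next
  case (Suc i)
  have "lpow wpw (Suc i) (-k) = lpow wpw i (-k-1) + lpow wpw i (-k+1)" by (simp add: Xop_def)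
  also have "lpow wpw i (-k-1) = lpow wpw i (k+1)"
  proof -
    have e: "-k-1 = -(k+1)" by simp
    show ?thesis unfolding e by (rule Suc.IH)
  qed
  also have "lpow wpw i (-k+1) = lpow wpw i (k-1)"
  proof -
    have e: "-k+1 = -(k-1)" by simp
    show ?thesis unfolding e by (rule Suc.IH)
  qed
  finally show ?case by (simp add: Xop_def add.commute)
qed

lemma lpow_top: "lpow wpw i (int i) = 1"
proof (induction i)
  case 0 then show ?case by (simp add: lone_def)
next
  case (Suc i)
  have "lpow wpw i (2 + int i) = 0" using suppin_lpow[of i] unfolding suppin_def by fastforce
  then show ?case using Suc by (simp add: lpow_Suc Xop_def)
qed

lemma lpow_parity: "odd (t + int i) \<Longrightarrow> lpow wpw i t = 0"
proof (induction i arbitrary: t)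
  case 0 then show ?case by (auto simp: lone_def)
next
  case (Suc i)
  have o: "odd (t - 1 + int i)" "odd (t + 1 + int i)" using Suc.prems by auto
  have "lpow wpw i (t - 1) = 0" "lpow wpw i (t + 1) = 0" using Suc.IH o by blast+
  then show ?case by (simp add: Xop_def)
qed

lemma ev_alt: assumes "degree Q \<le> D"
  shows "ev Q = (\<lambda>k. \<Sum>i\<le>D. coeff Q i * lpow wpw i k)"
proof
  fix k
  show "ev Q k = (\<Sum>i\<le>D. coeff Q i * lpow wpw i k)"
    unfolding ev_def
    by (rule sum.mono_neutral_left) (use assms in \<open>auto simp: coeff_eq_0\<close>)
qed

lemma suppin_ev: assumes "degree Q \<le> D" shows "suppin (ev Q) (- int D) (int D)"
proof -
  have "suppin (\<lambda>k. \<Sum>i\<le>D. coeff Q i * lpow wpw i k) (- int D) (int D)"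
    by (rule suppin_sum) (auto intro!: suppin_lin suppin_mono[OF suppin_lpow])
  then show ?thesis using ev_alt[OF assms] by simp
qed

lemma ev_refl: "lrefl (ev Q) = ev Q"
  unfolding lrefl_def ev_def by (simp add: lpow_refl)

lemma ev_lin: "ev (smult c Q + smult d R) = (\<lambda>k. c * ev Q k + d * ev R k)"
proof -
  let ?D = "max (degree Q) (degree R)"
  have "degree (smult c Q + smult d R) \<le> ?D"
    by (meson degree_add_le degree_smult_le max.cobounded1 max.cobounded2 order_trans)
  then show ?thesis
    using ev_alt[of Q ?D] ev_alt[of R ?D] ev_alt[of "smult c Q + smult d R" ?D]
    by (simp add: sum_distrib_left sum.distrib algebra_simps)
qed

lemma ev_monom: "ev (monom c N) = (\<lambda>k. c * lpow wpw N k)"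
proof -
  have "ev (monom c N) = (\<lambda>k. \<Sum>i\<le>N. coeff (monom c N) i * lpow wpw i k)"
    by (rule ev_alt) (simp add: degree_monom_le)
  also have "\<dots> = (\<lambda>k. c * lpow wpw N k)"
  proof
    fix x
    have "(\<Sum>i\<le>N. coeff (monom c N) i * lpow wpw i x) = (\<Sum>i\<in>{..N}. if i = N then c * lpow wpw N x else 0)"
      by (rule sum.cong) (auto simp: coeff_monom)
    then show "(\<Sum>i\<le>N. coeff (monom c N) i * lpow wpw i x) = c * lpow wpw N x" by simp
  qed
  finally show ?thesis .
qed

lemma ev_x: "ev (pCons 0 Q) = Xop (ev Q)"
proof -
  have "ev (pCons 0 Q) = (\<lambda>k. \<Sum>i\<le>Suc (degree Q). coeff (pCons 0 Q) i * lpow wpw i k)"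
    by (rule ev_alt) (simp add: degree_pCons_le)
  also have "\<dots> = (\<lambda>k. \<Sum>i\<le>degree Q. coeff Q i * lpow wpw (Suc i) k)"
    by (subst sum.atMost_Suc_shift) (simp del: lpow.simps)
  also have "\<dots> = Xop (ev Q)"
    by (simp add: ev_def lpow_Suc Xop_def fun_eq_iff sum.distrib algebra_simps)
  finally show ?thesis .
qed

lemma ev_mult_monom: "ev (Q * monom 1 k) = (Xop ^^ k) (ev Q)"
proof (induction k)
  case 0 then show ?case by simp
next
  case (Suc k)
  have "Q * monom 1 (Suc k) = pCons 0 (Q * monom 1 k)"
    by (simp add: monom_Suc mult_pCons_right)
  then show ?case using Suc ev_x by simp
qed

lemma Mfun_ev: "Mfun mom j Q = LL mom j (ev Q) 0"
proof -
  let ?D = "degree Q"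
  have "LL mom j (ev Q) 0 = LL mom j (\<lambda>k. \<Sum>i\<in>{..?D}. coeff Q i * lpow wpw i k) 0"
    by (simp add: ev_def)
  also have "\<dots> = (\<Sum>i\<in>{..?D}. coeff Q i * LL mom j (lpow wpw i) 0)"
    by (rule LL_sum_fun[where a = "- int ?D" and b = "int ?D"]) (auto intro: suppin_mono[OF suppin_lpow])
  also have "\<dots> = Mfun mom j Q"
    by (simp add: Mfun_def LL_def lshift_def)
  finally show ?thesis by simp
qed

lemma Mfun_monom: "Mfun mom j (Q * monom 1 k) = LL mom j ((Xop ^^ k) (ev Q)) 0"
  using Mfun_ev ev_mult_monom by simp

lemma suppin_Xop_pow: "suppin q a b \<Longrightarrow> suppin ((Xop ^^ k) q) (a - int k) (b + int k)"
proof (induction k)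
  case 0 then show ?case by simp
next
  case (Suc k) then show ?case using suppin_Xop[OF Suc.IH[OF Suc.prems]] by (simp add: algebra_simps)
qed

lemma LL_Xop: assumes "suppin q a b"
  shows "LL mom j (Xop q) t = LL mom j q (t + 1) + LL mom j q (t - 1)"
proof -
  have e: "Xop q = (\<lambda>k. 1 * lshift q 1 k + 1 * lshift q (-1) k)"
    by (simp add: Xop_def lshift_def fun_eq_iff)
  have s1: "suppin (lshift q 1) (a - 1) (b + 1)"
    using suppin_mono[OF suppin_lshift[OF assms, of 1]] by simp
  have s2: "suppin (lshift q (-1)) (a - 1) (b + 1)"
    using suppin_mono[OF suppin_lshift[OF assms, of "-1"]] by simp
  show ?thesis unfolding e LL_lin2[OF s1 s2] by (simp add: LL_lshift algebra_simps)
qed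

lemma G0: fixes g :: "nat \<Rightarrow> int \<Rightarrow> complex"
  assumes rec: "\<And>k t. g (Suc k) t = g k (t + 1) + g k (t - 1)"
  and sy: "\<And>t. g 0 (- t) = g 0 t"
  shows "g k (- t) = g k t"
proof (induction k arbitrary: t)
  case 0 then show ?case by (rule sy)
next
  case (Suc k)
  have "g (Suc k) (-t) = g k (-t + 1) + g k (-t - 1)" by (rule rec)
  moreover have "-t + 1 = -(t-1)" by simp
  moreover have "-t - 1 = -(t+1)" by simp
  ultimately have "g (Suc k) (-t) = g k (-(t-1)) + g k (-(t+1))" by metis
  then show ?case using Suc.IH[of "t-1"] Suc.IH[of "t+1"] rec[of k t] by (simp only:) (simp add: add.commute)
qed

lemma G1: fixes g :: "nat \<Rightarrow> int \<Rightarrow> complex"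
  assumes rec: "\<And>k t. g (Suc k) t = g k (t + 1) + g k (t - 1)"
  and z: "\<And>t. \<bar>t\<bar> < int K \<Longrightarrow> g 0 t = 0"
  shows "\<bar>t\<bar> + int k < int K \<Longrightarrow> g k t = 0"
proof (induction k arbitrary: t)
  case 0 then show ?case using z by simp
next
  case (Suc k)
  have "\<bar>t + 1\<bar> + int k < int K" "\<bar>t - 1\<bar> + int k < int K" using Suc.prems by auto
  then show ?case using Suc.IH by (simp add: rec)
qed

lemma G2: fixes g :: "nat \<Rightarrow> int \<Rightarrow> complex"
  assumes rec: "\<And>k t. g (Suc k) t = g k (t + 1) + g k (t - 1)"
  and z: "\<And>t. \<bar>t\<bar> < int K \<Longrightarrow> g 0 t = 0"
  shows "1 \<le> t \<Longrightarrow> t + int k = int K \<Longrightarrow> g k t = g 0 (int K)"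
proof (induction k arbitrary: t)
  case 0 then show ?case by simp
next
  case (Suc k)
  have "g k (t - 1) = 0" by (rule G1[OF rec z]) (use Suc.prems in auto)
  moreover have "g k (t + 1) = g 0 (int K)" by (rule Suc.IH) (use Suc.prems in auto)
  ultimately show ?case using rec[of k t] by simp
qed

lemma G3: fixes g :: "nat \<Rightarrow> int \<Rightarrow> complex"
  assumes rec: "\<And>k t. g (Suc k) t = g k (t + 1) + g k (t - 1)"
  and sy: "\<And>t. g 0 (- t) = g 0 t"
  and z: "\<And>t. \<bar>t\<bar> < int K \<Longrightarrow> g 0 t = 0" and K: "1 \<le> K"
  shows "g K 0 = 2 * g 0 (int K)"
proof -
  obtain K' where K': "K = Suc K'" using K by (cases K) auto
  have a: "g K' 1 = g 0 (int K)" by (rule G2[OF rec z]) (use K' in auto)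
  have "g K' (-1) = g K' 1" using G0[where g=g, OF rec sy, of K' 1] by simp
  then show ?thesis using a K' by (simp add: rec)
qed

lemma G4: fixes g :: "nat \<Rightarrow> int \<Rightarrow> complex"
  assumes rec: "\<And>k t. g (Suc k) t = g k (t + 1) + g k (t - 1)"
  and sy: "\<And>t. g 0 (- t) = g 0 t"
  and z: "\<And>k. k < K \<Longrightarrow> g k 0 = 0"
  shows "\<bar>t\<bar> < int K \<Longrightarrow> g 0 t = 0"
  using z
proof (induction K arbitrary: t)
  case 0 then show ?case by simp
next
  case (Suc K)
  have IH: "\<And>t. \<bar>t\<bar> < int K \<Longrightarrow> g 0 t = 0" using Suc.IH Suc.prems(2) by auto
  show ?case
  proof (cases "\<bar>t\<bar> < int K")
    case True then show ?thesis using IH by blast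
  next
    case False
    then have tK: "\<bar>t\<bar> = int K" using Suc.prems(1) by auto
    have "g 0 t = g 0 (int K)" using tK sy by (cases "t \<ge> 0") (auto, metis minus_minus)
    show ?thesis
    proof (cases "K = 0")
      case True then show ?thesis using Suc.prems(2)[of 0] tK by simp
    next
      case False
      then have "g K 0 = 2 * g 0 (int K)" using G3[OF rec sy IH] by simp
      moreover have "g K 0 = 0" using Suc.prems(2) by simp
      ultimately show ?thesis using \<open>g 0 t = g 0 (int K)\<close> by simp
    qed
  qed
qed

lemma suppin_ev_deg: "suppin (ev Q) (- int (degree Q)) (int (degree Q))"
  by (rule suppin_ev) simp

lemma bridge_rec: "LL mom j ((Xop ^^ Suc k) (ev Q)) t
   = LL mom j ((Xop ^^ k) (ev Q)) (t + 1) + LL mom j ((Xop ^^ k) (ev Q)) (t - 1)"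
  using LL_Xop[OF suppin_Xop_pow[OF suppin_ev_deg]] by simp

lemma bridge_sym: assumes "\<forall>k::nat. mom j (int k) = mom j (- int k)"
  shows "LL mom j ((Xop ^^ 0) (ev Q)) (- t) = LL mom j ((Xop ^^ 0) (ev Q)) t"
proof -
  have "LL mom j (ev Q) (- t) = LL mom j (lrefl (ev Q)) t"
    using LL_refl[where mom=mom and j=j, OF assms suppin_ev_deg] by simp
  then show ?thesis by (simp add: ev_refl)
qed

lemma bridge1: assumes "\<forall>t. \<bar>t\<bar> < int K \<longrightarrow> LL mom j (ev Q) t = 0" "k < K"
  shows "Mfun mom j (Q * monom 1 k) = 0"
proof -
  let ?g = "\<lambda>k t. LL mom j ((Xop ^^ k) (ev Q)) t"
  have "?g k 0 = 0"
    by (rule G1[of ?g K]) (use bridge_rec assms in auto)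
  then show ?thesis by (simp add: Mfun_monom)
qed

lemma bridge2: assumes sy: "\<forall>k::nat. mom j (int k) = mom j (- int k)"
  and "\<forall>k<K. Mfun mom j (Q * monom 1 k) = 0" "\<bar>t\<bar> < int K"
  shows "LL mom j (ev Q) t = 0"
proof -
  let ?g = "\<lambda>k t. LL mom j ((Xop ^^ k) (ev Q)) t"
  have "?g 0 t = 0"
    by (rule G4[of ?g K]) (use bridge_rec bridge_sym[where mom=mom and j=j, OF sy] assms Mfun_monom in auto)
  then show ?thesis by simp
qed

lemma bridge3: assumes sy: "\<forall>k::nat. mom j (int k) = mom j (- int k)"
  and "\<forall>t. \<bar>t\<bar> < int K \<longrightarrow> LL mom j (ev Q) t = 0" "1 \<le> K"
  shows "Mfun mom j (Q * monom 1 K) = 2 * LL mom j (ev Q) (int K)"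
proof -
  let ?g = "\<lambda>k t. LL mom j ((Xop ^^ k) (ev Q)) t"
  have "?g K 0 = 2 * ?g 0 (int K)"
    by (rule G3[of ?g K]) (use bridge_rec bridge_sym[where mom=mom and j=j, OF sy] assms in auto)
  then show ?thesis by (simp add: Mfun_monom)
qed

lemma bridge0: "Mfun mom j Q = LL mom j (ev Q) 0"
  by (rule Mfun_ev)

lemma ev_add_monom: "ev (Q + monom c N) = (\<lambda>k. ev Q k + c * lpow wpw N k)"
  using ev_lin[of 1 Q 1 "monom c N"] ev_monom[of c N] by simp

lemma SymPoly: "lrefl p = p \<Longrightarrow> suppin p (- int N) (int N)
   \<Longrightarrow> \<exists>Q. degree Q \<le> N \<and> coeff Q N = p (int N) \<and> ev Q = p"
proof (induction N arbitrary: p)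
  case 0
  have p: "p = (\<lambda>k. p 0 * lpow wpw 0 k)"
    using 0 by (auto simp: suppin_def lone_def fun_eq_iff)
  have "ev [:p 0:] = p"
    using ev_monom[of "p 0" 0] p by (simp add: monom_0)
  then show ?case by (intro exI[of _ "[:p 0:]"]) simp
next
  case (Suc N)
  let ?c = "p (int (Suc N))"
  define p' where "p' = (\<lambda>k. p k - ?c * lpow wpw (Suc N) k)"
  have rp: "lrefl p' = p'"
  proof
    fix k
    have "p (- k) = p k" using fun_cong[OF Suc.prems(1), of k] by (simp add: lrefl_def)
    then show "lrefl p' k = p' k"
      using lpow_refl[of "Suc N" k] unfolding p'_def lrefl_def by (simp del: lpow.simps)
  qed
  have pm: "p (- int (Suc N)) = ?c" using Suc.prems(1) unfolding lrefl_def by (metis)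
  have lm: "lpow wpw (Suc N) (- int (Suc N)) = 1" using lpow_refl lpow_top by metis
  have sp': "suppin p' (- int N) (int N)"
    unfolding suppin_def
  proof (intro allI impI)
    fix k assume k: "p' k \<noteq> 0"
    have "p k \<noteq> 0 \<or> lpow wpw (Suc N) k \<noteq> 0" using k unfolding p'_def by auto
    then have "- int (Suc N) \<le> k \<and> k \<le> int (Suc N)"
      using Suc.prems(2) suppin_lpow[of "Suc N"] unfolding suppin_def by blast
    moreover have "k \<noteq> int (Suc N)" using k lpow_top[of "Suc N"] unfolding p'_def by auto
    moreover have "k \<noteq> - int (Suc N)" using k lm pm unfolding p'_def by auto
    ultimately show "- int N \<le> k \<and> k \<le> int N" by auto
  qed
  obtain Q' where Q': "degree Q' \<le> N" "ev Q' = p'" using Suc.IH[OF rp sp'] by blast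
  let ?Q = "Q' + monom ?c (Suc N)"
  have "degree ?Q \<le> Suc N"
    using Q'(1) by (meson degree_add_le degree_monom_le le_SucI)
  moreover have "coeff ?Q (Suc N) = ?c" using Q'(1) by (simp add: coeff_eq_0)
  moreover have "ev ?Q = p" unfolding ev_add_monom Q'(2) p'_def by simp
  ultimately show ?case by blast
qed

lemma ev_coeff_top: assumes "degree Q \<le> N" shows "ev Q (int N) = coeff Q N"
proof -
  have "ev Q (int N) = (\<Sum>i\<le>N. coeff Q i * lpow wpw i (int N))"
    using ev_alt[OF assms] by simp
  also have "\<dots> = (\<Sum>i\<in>{..N}. if i = N then coeff Q N else 0)"
  proof (rule sum.cong)
    fix i assume "i \<in> {..N}"
    then show "coeff Q i * lpow wpw i (int N) = (if i = N then coeff Q N else 0)"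
      using suppin_lpow[of i] lpow_top[of N] unfolding suppin_def by (cases "i = N") auto
  qed simp
  finally show ?thesis by simp
qed

lemma ev_coeff_sub: assumes "degree Q \<le> Suc M" shows "ev Q (int M) = coeff Q M"
proof -
  have "ev Q (int M) = (\<Sum>i\<le>Suc M. coeff Q i * lpow wpw i (int M))"
    using ev_alt[OF assms] by simp
  also have "\<dots> = (\<Sum>i\<in>{..Suc M}. if i = M then coeff Q M else 0)"
  proof (rule sum.cong)
    fix i assume i: "i \<in> {..Suc M}"
    show "coeff Q i * lpow wpw i (int M) = (if i = M then coeff Q M else 0)"
    proof (cases "i = M")
      case True then show ?thesis using lpow_top[of M] by simp
    next
      case False
      show ?thesis
      proof (cases "i = Suc M")
        case True then show ?thesis using lpow_parity[of "int M" i] by simp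
      next
        case False
        then have "i < M" using i \<open>i \<noteq> M\<close> by auto
        then show ?thesis using suppin_lpow[of i] unfolding suppin_def by force
      qed
    qed
  qed simp
  finally show ?thesis by simp
qed

definition fin :: "(int \<Rightarrow> complex) \<Rightarrow> bool" where
  "fin p \<longleftrightarrow> (\<exists>a b. suppin p a b)"

lemma suppin_fin: "suppin p a b \<Longrightarrow> fin p"
  unfolding fin_def by blast

lemma fin_common: assumes "fin p" "fin q" obtains a b where "suppin p a b" "suppin q a b"
proof -
  obtain a b a' b' where "suppin p a b" "suppin q a' b'" using assms unfolding fin_def by blast
  then show ?thesis using that suppin_mono by (meson min.cobounded1 min.cobounded2 max.cobounded1 max.cobounded2)
qed

lemma fin_lshift[simp]: "fin p \<Longrightarrow> fin (lshift p t)"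
  unfolding fin_def using suppin_lshift by blast

lemma fin_refl[simp]: "fin p \<Longrightarrow> fin (lrefl p)"
  unfolding fin_def using suppin_refl by blast

lemma fin_add[simp]: "fin p \<Longrightarrow> fin q \<Longrightarrow> fin (\<lambda>k. p k + q k)"
proof -
  assume "fin p" "fin q"
  then obtain a b where "suppin p a b" "suppin q a b" by (rule fin_common)
  then show ?thesis unfolding fin_def suppin_def by (metis add.right_neutral)
qed

lemma fin_diff[simp]: "fin p \<Longrightarrow> fin q \<Longrightarrow> fin (\<lambda>k. p k - q k)"
proof -
  assume "fin p" "fin q"
  then obtain a b where "suppin p a b" "suppin q a b" by (rule fin_common)
  then show ?thesis unfolding fin_def suppin_def by (metis diff_self)
qed

lemma fin_scale[simp]: "fin p \<Longrightarrow> fin (\<lambda>k. c * p k)"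
  unfolding fin_def suppin_def by (metis mult_zero_right)

lemma fin_zero[simp]: "fin (\<lambda>k. 0)"
  unfolding fin_def suppin_def by auto

lemma fin_sum[simp]: "finite I \<Longrightarrow> (\<And>i. i \<in> I \<Longrightarrow> fin (f i)) \<Longrightarrow> fin (\<lambda>k. \<Sum>i\<in>I. f i k)"
proof (induction I rule: finite_induct)
  case empty then show ?case by simp
next
  case (insert x F)
  have "fin (\<lambda>k. f x k + (\<Sum>i\<in>F. f i k))" using insert by (intro fin_add) auto
  then show ?case using insert by simp
qed

lemma LL_add[simp]: "fin p \<Longrightarrow> fin q \<Longrightarrow> LL mom j (\<lambda>k. p k + q k) s = LL mom j p s + LL mom j q s"
proof -
  assume "fin p" "fin q"
  then obtain a b where "suppin p a b" "suppin q a b" by (rule fin_common)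
  then show ?thesis using LL_lin2[of p a b q mom j 1 1 s] by simp
qed

lemma LL_diff[simp]: "fin p \<Longrightarrow> fin q \<Longrightarrow> LL mom j (\<lambda>k. p k - q k) s = LL mom j p s - LL mom j q s"
proof -
  assume "fin p" "fin q"
  then obtain a b where "suppin p a b" "suppin q a b" by (rule fin_common)
  then show ?thesis using LL_lin2[of p a b q mom j 1 "-1" s] by simp
qed

lemma LL_scale[simp]: "fin p \<Longrightarrow> LL mom j (\<lambda>k. c * p k) s = c * LL mom j p s"
proof -
  assume "fin p"
  then obtain a b where "suppin p a b" unfolding fin_def by blast
  then show ?thesis using LL_lin2[of p a b p mom j c 0 s] by simp
qed

lemma LL_zero[simp]: "LL mom j (\<lambda>k. 0) s = 0"
  using LL_sum[of "\<lambda>k. 0" 0 0 mom j s] by (simp add: suppin_def)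

lemma LL_sumf[simp]: "finite I \<Longrightarrow> (\<And>i. i \<in> I \<Longrightarrow> fin (f i)) \<Longrightarrow>
   LL mom j (\<lambda>k. \<Sum>i\<in>I. f i k) s = (\<Sum>i\<in>I. LL mom j (f i) s)"
proof (induction I rule: finite_induct)
  case empty then show ?case by simp
next
  case (insert x F)
  have "LL mom j (\<lambda>k. \<Sum>i\<in>insert x F. f i k) s = LL mom j (\<lambda>k. f x k + (\<Sum>i\<in>F. f i k)) s"
    using insert by simp
  also have "\<dots> = LL mom j (f x) s + LL mom j (\<lambda>k. \<Sum>i\<in>F. f i k) s"
    using insert by (intro LL_add) auto
  finally show ?case using insert by simp
qed

lemma LL_refl': "\<forall>k::nat. mom j (int k) = mom j (- int k) \<Longrightarrow> fin p \<Longrightarrow> LL mom j (lrefl p) s = LL mom j p (- s)"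
  unfolding fin_def using LL_refl[where mom=mom and j=j] by blast

lemma Mfun_lin: "Mfun mom j (smult c A + smult d B) = c * Mfun mom j A + d * Mfun mom j B"
proof -
  have f: "fin (ev A)" "fin (ev B)" using suppin_ev_deg suppin_fin by blast+
  show ?thesis unfolding Mfun_ev ev_lin using f by simp
qed

lemma Mfun_add: "Mfun mom j (A + B) = Mfun mom j A + Mfun mom j B"
  using Mfun_lin[of mom j 1 A 1 B] by simp

lemma Mfun_smult: "Mfun mom j (smult c A) = c * Mfun mom j A"
  using Mfun_lin[of mom j c A 0 A] by simp

lemma Mfun_diff: "Mfun mom j (A - B) = Mfun mom j A - Mfun mom j B"
  using Mfun_lin[of mom j 1 A "-1" B] by simp

lemma Mfun_zero: "Mfun mom j 0 = 0"
  using Mfun_smult[of mom j 0 0] by simp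

lemma Mfun_sum: "finite I \<Longrightarrow> Mfun mom j (\<Sum>i\<in>I. f i) = (\<Sum>i\<in>I. Mfun mom j (f i))"
  by (induction I rule: finite_induct) (auto simp: Mfun_zero Mfun_add)

lemma KER_refl_gen:
  assumes sy: "\<forall>j<r. \<forall>k::nat. mom j (int k) = mom j (- int k)"
    and K: "KER r mom n m"
  shows "KER r mom m n"
  unfolding KER_def
proof (intro allI impI)
  fix p assume a: "suppin p (- msum r n) (msum r m - 1) \<and> orthc r mom m n p"
  define q where "q = lshift (lrefl p) (-1)"
  have sq: "suppin q (- msum r m) (msum r n - 1)"
    using suppin_lshift[OF suppin_refl[of p "- msum r n" "msum r m - 1"], of "-1"] a
    unfolding q_def by (simp add: algebra_simps)
  have fp: "fin p" using a suppin_fin by blast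
  have "orthc r mom n m q"
    unfolding orthc_def
  proof (intro allI impI)
    fix l k assume l: "l < r" and k: "- m l \<le> k \<and> k \<le> n l - 1"
    have "LL mom l q (- k) = LL mom l (lrefl p) (- k - 1)"
      unfolding q_def LL_lshift by simp
    also have "\<dots> = LL mom l p (- (- k - 1))"
      using LL_refl'[of mom l p] sy l fp by simp
    also have "\<dots> = 0"
    proof -
      have "- n l \<le> - k - 1 \<and> - k - 1 \<le> m l - 1" using k by auto
      then show ?thesis using a l unfolding orthc_def by blast
    qed
    finally show "LL mom l q (- k) = 0" .
  qed
  then have q0: "q = (\<lambda>_. 0)" using K sq unfolding KER_def by blast
  show "p = (\<lambda>_. 0)"
  proof
    fix x
    have "q (- x - 1) = p x" unfolding q_def lshift_def lrefl_def by simp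
    then show "p x = 0" using q0 by simp
  qed
qed

locale mosys =
  fixes r :: nat and mom :: "nat \<Rightarrow> int \<Rightarrow> complex"
  assumes r1: "r \<ge> 1"
    and sym: "\<forall>j<r. \<forall>k::nat. mom j (int k) = mom j (- int k)"
    and norm: "\<forall>n. (\<forall>i<r. 0 \<le> n i) \<longrightarrow>
                 normal r mom n n \<and> (\<forall>j<r. normal r mom (madd n (unitv j)) n)"
begin

definition nn :: "(nat \<Rightarrow> int) \<Rightarrow> bool" where "nn n \<longleftrightarrow> (\<forall>i<r. 0 \<le> n i)"

lemma msum_madd: "j < r \<Longrightarrow> msum r (madd n (unitv j)) = msum r n + 1"
  unfolding msum_def madd_def unitv_def by (simp add: sum.distrib)

lemma msum_msub: "j < r \<Longrightarrow> msum r (msub n (unitv j)) = msum r n - 1"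
  unfolding msum_def msub_def unitv_def by (simp add: sum_subtractf)

lemma msum_nonneg: "nn n \<Longrightarrow> 0 \<le> msum r n"
  unfolding msum_def nn_def by (auto intro!: sum_nonneg)

lemma madd_msub: "madd (msub n (unitv j)) (unitv j) = n"
  by (simp add: madd_def msub_def fun_eq_iff)

lemma nn_madd: "nn n \<Longrightarrow> nn (madd n (unitv j))"
  unfolding nn_def madd_def unitv_def by auto

lemma nn_msub: "nn n \<Longrightarrow> 1 \<le> n j \<Longrightarrow> nn (msub n (unitv j))"
  unfolding nn_def msub_def unitv_def by auto

lemma madd_at: "madd n (unitv j) i = n i + (if i = j then 1 else 0)"
  by (simp add: madd_def unitv_def)

lemma msub_at: "msub n (unitv j) i = n i - (if i = j then 1 else 0)"
  by (simp add: msub_def unitv_def)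

lemma LLr: "j < r \<Longrightarrow> fin p \<Longrightarrow> LL mom j (lrefl p) s = LL mom j p (- s)"
  using LL_refl'[of mom j p s] sym by simp

lemma degen_zero: "nn n \<Longrightarrow> (\<forall>j<r. n j = - n j) \<Longrightarrow> msum r n = 0"
  unfolding msum_def by simp

lemma KER_nn: "nn n \<Longrightarrow> KER r mom n n"
proof (cases "\<forall>j<r. n j = - n j")
  case True
  assume "nn n"
  then have m0: "msum r n = 0" using degen_zero True by blast
  show ?thesis unfolding KER_def
  proof (intro allI impI ext)
    fix p x assume a: "suppin p (- msum r n) (msum r n - 1) \<and> orthc r mom n n p"
    show "p x = 0"
    proof (rule ccontr)
      assume "p x \<noteq> 0"
      then show False using a m0 unfolding suppin_def by force
    qed
  qed
next
  case False
  assume n: "nn n"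
  then have "det (Tmat r mom n n) \<noteq> 0" using norm False unfolding normal_def nn_def by auto
  moreover have "inC r n n" using n unfolding inC_def nn_def by auto
  ultimately show ?thesis using det_KER by blast
qed

lemma nondeg_up: "nn n \<Longrightarrow> j < r \<Longrightarrow> \<not> (\<forall>i<r. madd n (unitv j) i = - n i)"
  unfolding nn_def by (auto simp: madd_at dest!: spec[of _ j])

lemma KER_up: "nn n \<Longrightarrow> j < r \<Longrightarrow> KER r mom (madd n (unitv j)) n"
proof -
  assume n: "nn n" and j: "j < r"
  then have "det (Tmat r mom (madd n (unitv j)) n) \<noteq> 0"
    using norm nondeg_up[OF n j] unfolding normal_def nn_def by auto
  moreover have "inC r (madd n (unitv j)) n" using n unfolding inC_def nn_def by (auto simp: madd_at)
  ultimately show ?thesis using det_KER by blast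
qed

lemma KER_down: "nn n \<Longrightarrow> j < r \<Longrightarrow> 1 \<le> n j \<Longrightarrow> KER r mom n (msub n (unitv j))"
  using KER_up[OF nn_msub] madd_msub by metis

lemma KER_down': "nn n \<Longrightarrow> j < r \<Longrightarrow> 1 \<le> n j \<Longrightarrow> KER r mom (msub n (unitv j)) n"
  using KER_refl_gen[OF sym KER_down] by blast

lemma PhiP_nn: "nn n \<Longrightarrow> PhiP r mom n n (Phi r mom n n)"
proof (cases "\<forall>j<r. n j = - n j")
  case True
  assume "nn n"
  then have m0: "msum r n = 0" using degen_zero True by blast
  have "Phi r mom n n = lone" using True unfolding Phi_def by simp
  moreover have "PhiP r mom n n lone"
    unfolding PhiP_def orthc_def suppin_def lone_def m0 using True by auto
  ultimately show ?thesis by simp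
next
  case False
  assume n: "nn n"
  then have "det (Tmat r mom n n) \<noteq> 0" using norm False unfolding normal_def nn_def by auto
  moreover have "inC r n n" using n unfolding inC_def nn_def by auto
  ultimately obtain p where "PhiP r mom n n p" using det_EX by blast
  then show ?thesis using Phi_char[OF KER_nn[OF n]] False by simp
qed

lemma PhiP_up: "nn n \<Longrightarrow> j < r \<Longrightarrow> PhiP r mom (madd n (unitv j)) n (Phi r mom (madd n (unitv j)) n)"
proof -
  assume n: "nn n" and j: "j < r"
  then have "det (Tmat r mom (madd n (unitv j)) n) \<noteq> 0"
    using norm nondeg_up[OF n j] unfolding normal_def nn_def by auto
  moreover have "inC r (madd n (unitv j)) n" using n unfolding inC_def nn_def by (auto simp: madd_at)
  ultimately obtain p where "PhiP r mom (madd n (unitv j)) n p" using det_EX by blast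
  then show ?thesis using Phi_char[OF KER_up[OF n j]] nondeg_up[OF n j] by simp
qed

lemma PhiP_down: "nn n \<Longrightarrow> j < r \<Longrightarrow> 1 \<le> n j \<Longrightarrow> PhiP r mom n (msub n (unitv j)) (Phi r mom n (msub n (unitv j)))"
  using PhiP_up[OF nn_msub] madd_msub by metis

lemma PhiP_fin: "PhiP r mom n m p \<Longrightarrow> fin p"
  unfolding PhiP_def using suppin_fin by blast

lemma Znz: assumes m: "nn m" and j: "j < r"
  shows "LL mom j (Phi r mom m m) (- m j) \<noteq> 0"
proof
  assume z: "LL mom j (Phi r mom m m) (- m j) = 0"
  let ?P = "Phi r mom m m"
  have P: "PhiP r mom m m ?P" by (rule PhiP_nn[OF m])
  have "suppin ?P (- msum r m) (msum r (madd m (unitv j)) - 1)"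
    using P j by (simp add: PhiP_def msum_madd)
  moreover have "orthc r mom (madd m (unitv j)) m ?P"
    unfolding orthc_def
  proof (intro allI impI)
    fix l k assume l: "l < r" and k: "- m l \<le> k \<and> k \<le> madd m (unitv j) l - 1"
    show "LL mom l ?P (- k) = 0"
    proof (cases "l = j \<and> k = m j")
      case True then show ?thesis using z by simp
    next
      case False
      then have "k \<le> m l - 1" using k by (auto simp: madd_at split: if_splits)
      then show ?thesis using P l k unfolding PhiP_def orthc_def by auto
    qed
  qed
  ultimately have "?P = (\<lambda>_. 0)" using KER_up[OF m j] unfolding KER_def by blast
  moreover have "?P (msum r m) = 1" using P unfolding PhiP_def by simp
  ultimately show False by simp
qed

end

lemma deg_lt: "degree (R :: complex poly) \<le> N \<Longrightarrow> coeff R N = 0 \<Longrightarrow> R = 0 \<or> degree R < N"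
  by (metis le_neq_implies_less leading_coeff_0_iff)

lemma ev_zero: "ev 0 = (\<lambda>k. 0)"
  by (simp add: ev_def fun_eq_iff)

lemma ev_smult: "ev (smult c Q) = (\<lambda>k. c * ev Q k)"
  using ev_lin[of c Q 0 Q] by simp

context mosys begin

definition sy :: "(int \<Rightarrow> complex) \<Rightarrow> int \<Rightarrow> complex" where
  "sy p = (\<lambda>k. p k + lrefl p k)"

definition Mo :: "(nat \<Rightarrow> int) \<Rightarrow> complex poly \<Rightarrow> bool" where
  "Mo m P \<longleftrightarrow> (\<forall>j<r. \<forall>k::nat. int k < m j \<longrightarrow> Mfun mom j (P * monom 1 k) = 0)"

definition Lo :: "(nat \<Rightarrow> int) \<Rightarrow> (int \<Rightarrow> complex) \<Rightarrow> bool" where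
  "Lo m p \<longleftrightarrow> (\<forall>j<r. \<forall>t. \<bar>t\<bar> < m j \<longrightarrow> LL mom j p t = 0)"

definition PERF :: "(nat \<Rightarrow> int) \<Rightarrow> bool" where
  "PERF m \<longleftrightarrow> (\<forall>D. (D = 0 \<or> degree D < nat (msum r m)) \<and> Mo m D \<longrightarrow> D = 0)"

definition PP :: "(nat \<Rightarrow> int) \<Rightarrow> complex poly \<Rightarrow> bool" where
  "PP m P \<longleftrightarrow> degree P = nat (msum r m) \<and> lead_coeff P = 1 \<and> Mo m P"

lemma refl_sy: "lrefl (sy p) = sy p"
  by (simp add: sy_def lrefl_def fun_eq_iff add.commute)

lemma fin_sy: "fin p \<Longrightarrow> fin (sy p)"
  unfolding sy_def by simp

lemma LL_sy: "j < r \<Longrightarrow> fin p \<Longrightarrow> LL mom j (sy p) t = LL mom j p t + LL mom j p (- t)"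
  unfolding sy_def using LLr by simp

lemma suppin_sy: assumes "suppin p (- a) a" shows "suppin (sy p) (- a) a"
  unfolding suppin_def
proof (intro allI impI)
  fix k assume "sy p k \<noteq> 0"
  then have "p k \<noteq> 0 \<or> p (- k) \<noteq> 0" unfolding sy_def lrefl_def by auto
  then show "- a \<le> k \<and> k \<le> a"
  proof
    assume "p k \<noteq> 0" then show ?thesis using assms unfolding suppin_def by blast
  next
    assume "p (- k) \<noteq> 0" then have "- a \<le> - k \<and> - k \<le> a" using assms unfolding suppin_def by blast
    then show ?thesis by auto
  qed
qed

lemma Mo_lin: "Mo m A \<Longrightarrow> Mo m B \<Longrightarrow> Mo m (smult c A + smult d B)"
  unfolding Mo_def by (simp add: distrib_right Mfun_add Mfun_smult)

lemma Mo_smult: "Mo m A \<Longrightarrow> Mo m (smult c A)"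
  using Mo_lin[of m A A c 0] by simp

lemma Mo_diff: "Mo m A \<Longrightarrow> Mo m B \<Longrightarrow> Mo m (A - B)"
  using Mo_lin[of m A B 1 "-1"] by simp

lemma Lo_Mo: assumes m: "nn m" and L: "Lo m (ev Q)" shows "Mo m Q"
  unfolding Mo_def
proof (intro allI impI)
  fix j k assume j: "j < r" and k: "int k < m j"
  have "\<forall>t. \<bar>t\<bar> < int (nat (m j)) \<longrightarrow> LL mom j (ev Q) t = 0"
    using L j m unfolding Lo_def nn_def by auto
  moreover have "k < nat (m j)" using k by auto
  ultimately show "Mfun mom j (Q * monom 1 k) = 0" by (rule bridge1)
qed

lemma Lo_Phi: assumes m: "nn m" shows "Lo m (sy (Phi r mom m m))"
  unfolding Lo_def
proof (intro allI impI)
  fix j t assume j: "j < r" and t: "\<bar>t\<bar> < m j"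
  let ?P = "Phi r mom m m"
  have P: "PhiP r mom m m ?P" by (rule PhiP_nn[OF m])
  have o: "\<And>k. - m j \<le> k \<Longrightarrow> k \<le> m j - 1 \<Longrightarrow> LL mom j ?P (- k) = 0"
    using P j unfolding PhiP_def orthc_def by blast
  have "LL mom j ?P (- t) = 0" using o[of t] t by auto
  moreover have "LL mom j ?P t = 0" using o[of "- t"] t by auto
  ultimately show "LL mom j (sy ?P) t = 0" using LL_sy[OF j PhiP_fin[OF P]] by simp
qed

lemma SYMQ: assumes m: "nn m"
  shows "\<exists>Q. degree Q \<le> nat (msum r m) \<and> coeff Q (nat (msum r m)) = 1 + alpha r mom m m
           \<and> ev Q = sy (Phi r mom m m) \<and> Mo m Q"
proof -
  let ?P = "Phi r mom m m"
  let ?N = "nat (msum r m)"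
  have P: "PhiP r mom m m ?P" by (rule PhiP_nn[OF m])
  have N: "int ?N = msum r m" using msum_nonneg[OF m] by simp
  have "suppin (sy ?P) (- int ?N) (int ?N)"
    using suppin_sy P N unfolding PhiP_def by simp
  then obtain Q where Q: "degree Q \<le> ?N" "coeff Q ?N = sy ?P (int ?N)" "ev Q = sy ?P"
    using SymPoly[OF refl_sy] by blast
  have "sy ?P (int ?N) = 1 + alpha r mom m m"
    using P N unfolding sy_def lrefl_def alpha_def PhiP_def by simp
  moreover have "Mo m Q" using Lo_Mo[OF m] Lo_Phi[OF m] Q(3) by simp
  ultimately show ?thesis using Q by auto
qed

lemma TOPM: assumes m: "nn m" and j: "j < r" and Q: "ev Q = sy (Phi r mom m m)"
  shows "Mfun mom j (Q * monom 1 (nat (m j))) = 2 * LL mom j (Phi r mom m m) (- m j)"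
proof -
  let ?P = "Phi r mom m m"
  have P: "PhiP r mom m m ?P" by (rule PhiP_nn[OF m])
  have f: "fin ?P" by (rule PhiP_fin[OF P])
  show ?thesis
  proof (cases "m j = 0")
    case True
    have "Mfun mom j (Q * monom 1 (nat (m j))) = LL mom j (ev Q) 0"
      using True bridge0 by (simp add: monom_0)
    then show ?thesis using True Q LL_sy[OF j f] by simp
  next
    case False
    then have mj: "1 \<le> m j" using m j unfolding nn_def by force
    have "\<forall>t. \<bar>t\<bar> < int (nat (m j)) \<longrightarrow> LL mom j (ev Q) t = 0"
      using Lo_Phi[OF m] j Q mj unfolding Lo_def by auto
    then have "Mfun mom j (Q * monom 1 (nat (m j))) = 2 * LL mom j (ev Q) (int (nat (m j)))"
      using bridge3[of mom j] sym j mj by auto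
    also have "\<dots> = 2 * (LL mom j ?P (m j) + LL mom j ?P (- m j))"
      using Q LL_sy[OF j f] mj by simp
    also have "LL mom j ?P (m j) = 0"
    proof -
      have o: "\<forall>k. - m j \<le> k \<and> k \<le> m j - 1 \<longrightarrow> LL mom j ?P (- k) = 0"
        using P j unfolding PhiP_def orthc_def by blast
      show ?thesis using spec[OF o, of "- m j"] mj by simp
    qed
    finally show ?thesis by simp
  qed
qed

lemma ALPHA: assumes m: "nn m" and pf: "PERF m" shows "1 + alpha r mom m m \<noteq> 0"
proof
  assume a: "1 + alpha r mom m m = 0"
  let ?P = "Phi r mom m m"
  obtain Q where Q: "degree Q \<le> nat (msum r m)" "coeff Q (nat (msum r m)) = 1 + alpha r mom m m"
      "ev Q = sy ?P" "Mo m Q" using SYMQ[OF m] by blast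
  have "Q = 0 \<or> degree Q < nat (msum r m)" using deg_lt[OF Q(1)] Q(2) a by simp
  then have "Q = 0" using pf Q(4) unfolding PERF_def by blast
  then have s0: "sy ?P = (\<lambda>k. 0)" using Q(3) ev_zero by simp
  show False
  proof (cases "\<forall>j<r. m j = - m j")
    case True
    then have "?P = lone" unfolding Phi_def by simp
    moreover have "msum r m = 0" using degen_zero[OF m True] .
    ultimately have "alpha r mom m m = 1" by (simp add: alpha_def lone_def)
    then show False using a by simp
  next
    case False
    then obtain j where j: "j < r" "m j \<noteq> - m j" by blast
    then have mj: "1 \<le> m j" using m unfolding nn_def by force
    have P: "PhiP r mom m m ?P" by (rule PhiP_nn[OF m])
    have "LL mom j (sy ?P) (- m j) = 0" using s0 by simp
    then have "LL mom j ?P (- m j) + LL mom j ?P (m j) = 0"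
      using LL_sy[OF j(1) PhiP_fin[OF P]] by simp
    moreover have "LL mom j ?P (- (- m j)) = 0"
    proof -
      have o: "\<forall>k. - m j \<le> k \<and> k \<le> m j - 1 \<longrightarrow> LL mom j ?P (- k) = 0"
        using P j unfolding PhiP_def orthc_def by blast
      show ?thesis using spec[OF o, of "- m j"] mj by simp
    qed
    ultimately have "LL mom j ?P (- m j) = 0" by simp
    then show False using Znz[OF m j(1)] by simp
  qed
qed

lemma PERF_step: assumes m: "nn m" and IH: "\<And>m'. nn m' \<Longrightarrow> msum r m' < msum r m \<Longrightarrow> PERF m'"
  shows "PERF m"
  unfolding PERF_def
proof (intro allI impI)
  fix D assume D: "(D = 0 \<or> degree D < nat (msum r m)) \<and> Mo m D"
  show "D = 0"
  proof (cases "\<forall>j<r. m j = - m j")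
    case True
    then have "msum r m = 0" using degen_zero[OF m] by blast
    then show ?thesis using D by simp
  next
    case False
    then obtain j where j: "j < r" "m j \<noteq> - m j" by blast
    then have mj: "1 \<le> m j" using m unfolding nn_def by force
    define m' where "m' = msub m (unitv j)"
    have m': "nn m'" using nn_msub[OF m mj] unfolding m'_def .
    have sm: "msum r m' = msum r m - 1" using msum_msub[OF j(1)] unfolding m'_def .
    have pf: "PERF m'" using IH[OF m'] sm by simp
    let ?N = "nat (msum r m')"
    have NN: "nat (msum r m) = Suc ?N" using sm msum_nonneg[OF m'] by simp
    obtain Q where Q: "degree Q \<le> ?N" "coeff Q ?N = 1 + alpha r mom m' m'"
      "ev Q = sy (Phi r mom m' m')" "Mo m' Q" using SYMQ[OF m'] by blast
    have a: "1 + alpha r mom m' m' \<noteq> 0" by (rule ALPHA[OF m' pf])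
    define c where "c = coeff D ?N / (1 + alpha r mom m' m')"
    define D' where "D' = D - smult c Q"
    have dD: "degree D \<le> ?N" using D NN by auto
    have "degree D' \<le> ?N" unfolding D'_def using dD Q(1)
      by (meson degree_diff_le degree_smult_le order_trans)
    moreover have "coeff D' ?N = 0" unfolding D'_def c_def using Q(2) a by simp
    ultimately have dD': "D' = 0 \<or> degree D' < ?N" using deg_lt by blast
    have MoD: "Mo m' D"
      using D unfolding Mo_def m'_def by (auto simp: msub_at)
    have "Mo m' D'" unfolding D'_def by (rule Mo_diff[OF MoD Mo_smult[OF Q(4)]])
    then have "D' = 0" using pf dD' unfolding PERF_def by blast
    then have Dc: "D = smult c Q" unfolding D'_def by simp
    let ?k = "nat (m' j)"
    have "int ?k < m j" using m' j(1) mj unfolding m'_def nn_def by (simp add: msub_at)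
    then have "Mfun mom j (D * monom 1 ?k) = 0" using D j(1) unfolding Mo_def by blast
    then have "c * Mfun mom j (Q * monom 1 ?k) = 0" using Dc by (simp add: Mfun_smult)
    moreover have "Mfun mom j (Q * monom 1 ?k) = 2 * LL mom j (Phi r mom m' m') (- m' j)"
      by (rule TOPM[OF m' j(1) Q(3)])
    moreover have "LL mom j (Phi r mom m' m') (- m' j) \<noteq> 0" by (rule Znz[OF m' j(1)])
    ultimately have "c = 0" by simp
    then show "D = 0" using Dc by simp
  qed
qed

lemma PERF_all: "nn m \<Longrightarrow> PERF m"
proof (induction "nat (msum r m)" arbitrary: m rule: less_induct)
  case less
  show ?case
  proof (rule PERF_step[OF less.prems])
    fix m' assume m': "nn m'" "msum r m' < msum r m"
    then have "nat (msum r m') < nat (msum r m)" using msum_nonneg[OF m'(1)] by simp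
    then show "PERF m'" using less.hyps m'(1) by blast
  qed
qed

lemma alpha_ne: "nn m \<Longrightarrow> 1 + alpha r mom m m \<noteq> 0"
  using ALPHA PERF_all by blast

lemma PP_unique: assumes m: "nn m" and P: "PP m P" and P': "PP m P'" shows "P = P'"
proof -
  let ?N = "nat (msum r m)"
  have "degree (P - P') \<le> ?N" using degree_diff_le[of P "degree P" P'] P P' unfolding PP_def by simp
  moreover have "coeff (P - P') ?N = 0" using P P' unfolding PP_def by (metis coeff_diff diff_self)
  ultimately have "P - P' = 0 \<or> degree (P - P') < ?N" using deg_lt by blast
  moreover have "Mo m (P - P')" using P P' Mo_diff unfolding PP_def by blast
  ultimately have "P - P' = 0" using PERF_all[OF m] unfolding PERF_def by blast
  then show ?thesis by simp
qed

lemma Pn_eq: assumes m: "nn m" and P: "PP m P" shows "Pn r mom m = P"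
proof -
  have "Pn r mom m = (THE P. PP m P)" unfolding Pn_def PP_def Mo_def ..
  also have "\<dots> = P" using PP_unique[OF m] P by blast
  finally show ?thesis .
qed

lemma Pn_ev: assumes m: "nn m" and rp: "lrefl p = p" and sp: "suppin p (- msum r m) (msum r m)"
  and p1: "p (msum r m) = 1" and L: "Lo m p"
  shows "ev (Pn r mom m) = p"
proof -
  let ?N = "nat (msum r m)"
  have N: "int ?N = msum r m" using msum_nonneg[OF m] by simp
  have sp': "suppin p (- int ?N) (int ?N)" using sp N by simp
  obtain Q where Q: "degree Q \<le> ?N" "coeff Q ?N = p (int ?N)" "ev Q = p"
    using SymPoly[OF rp sp'] by blast
  have c1: "coeff Q ?N = 1" using Q(2) N p1 by simp
  then have "degree Q = ?N" using Q(1) le_degree[of Q ?N] by simp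
  then have "PP m Q" unfolding PP_def using c1 Lo_Mo[OF m] L Q(3) by simp
  then show ?thesis using Pn_eq[OF m] Q(3) by simp
qed

lemma Pn_PP: assumes m: "nn m"
  shows "PP m (Pn r mom m) \<and> ev (Pn r mom m) = (\<lambda>k. inverse (1 + alpha r mom m m) * sy (Phi r mom m m) k)"
proof -
  let ?N = "nat (msum r m)"
  let ?a = "1 + alpha r mom m m"
  obtain Q where Q: "degree Q \<le> ?N" "coeff Q ?N = ?a" "ev Q = sy (Phi r mom m m)" "Mo m Q"
    using SYMQ[OF m] by blast
  have a: "?a \<noteq> 0" by (rule alpha_ne[OF m])
  have dQ: "degree Q = ?N" using Q(1,2) a le_degree[of Q ?N] by simp
  let ?P = "smult (inverse ?a) Q"
  have "PP m ?P" unfolding PP_def using dQ Q(2) a Mo_smult[OF Q(4)] by simp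
  then have "Pn r mom m = ?P" by (rule Pn_eq[OF m])
  then show ?thesis using \<open>PP m ?P\<close> Q(3) by (simp add: ev_smult)
qed

lemma TOPP: assumes m: "nn m" and j: "j < r"
  shows "(1 + alpha r mom m m) * Mfun mom j (Pn r mom m * monom 1 (nat (m j)))
         = 2 * LL mom j (Phi r mom m m) (- m j)"
proof -
  let ?a = "1 + alpha r mom m m"
  have a: "?a \<noteq> 0" by (rule alpha_ne[OF m])
  let ?Q = "smult ?a (Pn r mom m)"
  have "ev ?Q = sy (Phi r mom m m)" using Pn_PP[OF m] a by (simp add: ev_smult mult.assoc[symmetric])
  then have "Mfun mom j (?Q * monom 1 (nat (m j))) = 2 * LL mom j (Phi r mom m m) (- m j)"
    by (rule TOPM[OF m j])
  then show ?thesis by (simp add: Mfun_smult)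
qed

end

lemma PhiP_supp: "PhiP r mom n m p \<Longrightarrow> p k \<noteq> 0 \<Longrightarrow> - msum r m \<le> k \<and> k \<le> msum r n"
  unfolding PhiP_def suppin_def by blast

lemma PhiP_out: "PhiP r mom n m p \<Longrightarrow> k < - msum r m \<or> msum r n < k \<Longrightarrow> p k = 0"
  using PhiP_supp by fastforce

lemma PhiP_top: "PhiP r mom n m p \<Longrightarrow> p (msum r n) = 1"
  unfolding PhiP_def by blast

lemma PhiP_orth: "PhiP r mom n m p \<Longrightarrow> l < r \<Longrightarrow> - m l \<le> k \<Longrightarrow> k \<le> n l - 1 \<Longrightarrow> LL mom l p (- k) = 0"
  unfolding PhiP_def orthc_def by blast

lemma PhiP_suppin: "PhiP r mom n m p \<Longrightarrow> suppin p (- msum r m) (msum r n)"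
  unfolding PhiP_def by blast

context mosys begin

definition Iset :: "(nat \<Rightarrow> int) \<Rightarrow> nat set" where "Iset n = {i. i < r \<and> 1 \<le> n i}"
definition PH :: "(nat \<Rightarrow> int) \<Rightarrow> int \<Rightarrow> complex" where "PH n = Phi r mom n n"
definition UU :: "(nat \<Rightarrow> int) \<Rightarrow> nat \<Rightarrow> int \<Rightarrow> complex" where "UU n l = Phi r mom (madd n (unitv l)) n"
definition GG :: "(nat \<Rightarrow> int) \<Rightarrow> nat \<Rightarrow> int \<Rightarrow> complex" where "GG n l = Phi r mom (msub n (unitv l)) n"
definition EE :: "(nat \<Rightarrow> int) \<Rightarrow> nat \<Rightarrow> int \<Rightarrow> complex" where "EE n l = lshift (lrefl (GG n l)) (-1)"
definition YY :: "(nat \<Rightarrow> int) \<Rightarrow> nat \<Rightarrow> complex" where "YY n l = LL mom l (GG n l) (1 - n l)"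
definition ZZ :: "(nat \<Rightarrow> int) \<Rightarrow> nat \<Rightarrow> complex" where "ZZ n l = LL mom l (PH n) (- n l)"

lemma finite_Iset: "finite (Iset n)" unfolding Iset_def by simp

lemma R1: assumes n: "nn n" and l: "l < r" and nl: "1 \<le> n l"
  defines "A \<equiv> PH (msub n (unitv l))"
  defines "\<beta> \<equiv> - LL mom l A (n l) / LL mom l A (1 - n l)"
  shows "GG n l = (\<lambda>k. A k + \<beta> * lshift (lrefl A) (-1) k) \<and> PhiP r mom (msub n (unitv l)) n (GG n l)"
proof -
  let ?m = "msub n (unitv l)"
  have m: "nn ?m" by (rule nn_msub[OF n nl])
  have A: "PhiP r mom ?m ?m A" unfolding A_def PH_def by (rule PhiP_nn[OF m])
  have sm: "msum r ?m = msum r n - 1" by (rule msum_msub[OF l])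
  have ml: "?m l = n l - 1" by (simp add: msub_at)
  have mi: "\<And>i. i \<noteq> l \<Longrightarrow> ?m i = n i" by (simp add: msub_at)
  have Z: "LL mom l A (1 - n l) \<noteq> 0" using Znz[OF m l] ml unfolding A_def PH_def by simp
  have fA: "fin A" by (rule PhiP_fin[OF A])
  define B where "B = (\<lambda>k. A k + \<beta> * lshift (lrefl A) (-1) k)"
  have Bk: "\<And>k. B k = A k + \<beta> * A (- k - 1)" unfolding B_def lshift_def lrefl_def by simp
  have LLB: "\<And>i s. i < r \<Longrightarrow> LL mom i B s = LL mom i A s + \<beta> * LL mom i A (1 - s)"
  proof -
    fix i s assume i: "i < r"
    have "LL mom i B s = LL mom i A s + \<beta> * LL mom i (lshift (lrefl A) (-1)) s"
      unfolding B_def using fA by simp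
    also have "LL mom i (lshift (lrefl A) (-1)) s = LL mom i A (1 - s)"
      unfolding LL_lshift using LLr[OF i fA] by simp
    finally show "LL mom i B s = LL mom i A s + \<beta> * LL mom i A (1 - s)" .
  qed
  have "PhiP r mom ?m n B"
    unfolding PhiP_def
  proof (intro conjI)
    show "suppin B (- msum r n) (msum r ?m)"
      unfolding suppin_def
    proof (intro allI impI)
      fix k assume "B k \<noteq> 0"
      then have "A k \<noteq> 0 \<or> A (- k - 1) \<noteq> 0" unfolding Bk by auto
      then show "- msum r n \<le> k \<and> k \<le> msum r ?m"
        using PhiP_supp[OF A, of k] PhiP_supp[OF A, of "- k - 1"] sm by auto
    qed
    show "B (msum r ?m) = 1"
      unfolding Bk using PhiP_top[OF A] PhiP_out[OF A, of "- msum r ?m - 1"] by simp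
    show "orthc r mom ?m n B"
      unfolding orthc_def
    proof (intro allI impI)
      fix i k assume i: "i < r" and k: "- n i \<le> k \<and> k \<le> ?m i - 1"
      show "LL mom i B (- k) = 0"
      proof (cases "- ?m i \<le> k")
        case True
        have "LL mom i A (- k) = 0" using PhiP_orth[OF A i True] k by simp
        moreover have "LL mom i A (- (- k - 1)) = 0"
          using PhiP_orth[OF A i, of "- k - 1"] True k by simp
        ultimately show ?thesis using LLB[OF i] by (simp add: algebra_simps)
      next
        case False
        then have il: "i = l" and kk: "k = - n l" using k mi ml by (cases "i = l"; auto)+
        have "LL mom l B (n l) = LL mom l A (n l) + \<beta> * LL mom l A (1 - n l)"
          using LLB[OF l] by simp
        also have "\<dots> = 0" unfolding \<beta>_def using Z by simp
        finally show ?thesis using il kk by simp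
      qed
    qed
  qed
  moreover have "\<not> (\<forall>i<r. ?m i = - n i)"
  proof -
    have "?m l \<noteq> - n l" using ml nl by simp
    then show ?thesis using l by blast
  qed
  ultimately have "Phi r mom ?m n = B" using Phi_char[OF KER_down'[OF n l nl]] by blast
  then show ?thesis using \<open>PhiP r mom ?m n B\<close> unfolding GG_def B_def by simp
qed

lemma GG_PhiP: assumes n: "nn n" and l: "l < r" and nl: "1 \<le> n l"
  shows "PhiP r mom (msub n (unitv l)) n (GG n l)"
  using R1[OF n l nl] by blast


lemma PH_PhiP: "nn n \<Longrightarrow> PhiP r mom n n (PH n)"
  unfolding PH_def by (rule PhiP_nn)

lemma UU_PhiP: "nn n \<Longrightarrow> l < r \<Longrightarrow> PhiP r mom (madd n (unitv l)) n (UU n l)"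
  unfolding UU_def by (rule PhiP_up)

lemma YY_nz: assumes n: "nn n" and l: "l < r" and nl: "1 \<le> n l" shows "YY n l \<noteq> 0"
proof
  assume Y: "YY n l = 0"
  let ?m = "msub n (unitv l)"
  have G: "PhiP r mom ?m n (GG n l)" by (rule GG_PhiP[OF n l nl])
  have sm: "msum r ?m = msum r n - 1" by (rule msum_msub[OF l])
  have "suppin (GG n l) (- msum r n) (msum r n - 1)" using PhiP_suppin[OF G] sm by simp
  moreover have "orthc r mom n n (GG n l)"
    unfolding orthc_def
  proof (intro allI impI)
    fix i k assume i: "i < r" and k: "- n i \<le> k \<and> k \<le> n i - 1"
    show "LL mom i (GG n l) (- k) = 0"
    proof (cases "i = l \<and> k = n l - 1")
      case True then show ?thesis using Y unfolding YY_def by simp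
    next
      case False
      then have "k \<le> ?m i - 1" using k by (auto simp: msub_at)
      then show ?thesis using PhiP_orth[OF G i] k by simp
    qed
  qed
  ultimately have "GG n l = (\<lambda>_. 0)" using KER_nn[OF n] unfolding KER_def by blast
  moreover have "GG n l (msum r ?m) = 1" by (rule PhiP_top[OF G])
  ultimately show False by simp
qed

lemma EE_at: "EE n l k = GG n l (- k - 1)"
  unfolding EE_def lshift_def lrefl_def by simp

lemma EE_PhiP_facts: assumes n: "nn n" and l: "l < r" and nl: "1 \<le> n l"
  shows "suppin (EE n l) (- msum r n) (msum r n - 1)"
    and "fin (EE n l)"
    and "EE n l (- msum r n) = 1"
    and "EE n l (msum r n) = 0"
    and "EE n l (msum r n - 1) = alpha r mom (msub n (unitv l)) n"
proof -
  let ?m = "msub n (unitv l)"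
  have G: "PhiP r mom ?m n (GG n l)" by (rule GG_PhiP[OF n l nl])
  have sm: "msum r ?m = msum r n - 1" by (rule msum_msub[OF l])
  show s: "suppin (EE n l) (- msum r n) (msum r n - 1)"
    unfolding suppin_def EE_at using PhiP_supp[OF G] sm by fastforce
  show "fin (EE n l)" using suppin_fin[OF s] .
  show "EE n l (- msum r n) = 1" unfolding EE_at using PhiP_top[OF G] sm by simp
  show "EE n l (msum r n) = 0" unfolding EE_at using PhiP_out[OF G, of "- msum r n - 1"] by simp
  show "EE n l (msum r n - 1) = alpha r mom ?m n" unfolding EE_at alpha_def GG_def by simp
qed

lemma LL_EE: assumes n: "nn n" and l: "l < r" and nl: "1 \<le> n l" and i: "i < r"
  shows "LL mom i (EE n l) s = LL mom i (GG n l) (1 - s)"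
proof -
  have f: "fin (GG n l)" using PhiP_fin[OF GG_PhiP[OF n l nl]] .
  show ?thesis unfolding EE_def LL_lshift using LLr[OF i f] by simp
qed

lemma EE_orth: assumes n: "nn n" and l: "l < r" and nl: "1 \<le> n l" and i: "i < r"
  and k: "- n i \<le> k" "k \<le> n i - 1" and ne: "\<not> (i = l \<and> k = - n l)"
  shows "LL mom i (EE n l) (- k) = 0"
proof -
  let ?m = "msub n (unitv l)"
  have G: "PhiP r mom ?m n (GG n l)" by (rule GG_PhiP[OF n l nl])
  have "LL mom i (EE n l) (- k) = LL mom i (GG n l) (- (- 1 - k))"
    using LL_EE[OF n l nl i] by (simp add: add.commute)
  also have "\<dots> = 0"
    by (rule PhiP_orth[OF G i]) (use k ne in \<open>auto simp: msub_at\<close>)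
  finally show ?thesis .
qed

lemma EE_Y: assumes n: "nn n" and l: "l < r" and nl: "1 \<le> n l"
  shows "LL mom l (EE n l) (n l) = YY n l"
  using LL_EE[OF n l nl l] unfolding YY_def by simp

lemma V_eq: assumes n: "nn n" and j: "j < r" and nj: "1 \<le> n j"
  shows "Phi r mom n (msub n (unitv j)) = (\<lambda>k. PH n k - alpha r mom n n * EE n j k)"
proof -
  let ?m = "msub n (unitv j)"
  let ?W = "\<lambda>k. PH n k - alpha r mom n n * EE n j k"
  have P: "PhiP r mom n n (PH n)" by (rule PH_PhiP[OF n])
  note EF = EE_PhiP_facts[OF n j nj]
  have sm: "msum r ?m = msum r n - 1" by (rule msum_msub[OF j])
  have "PhiP r mom n ?m ?W"
    unfolding PhiP_def
  proof (intro conjI)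
    show "suppin ?W (- msum r ?m) (msum r n)"
      unfolding suppin_def
    proof (intro allI impI)
      fix k assume k: "?W k \<noteq> 0"
      then have "PH n k \<noteq> 0 \<or> EE n j k \<noteq> 0" by auto
      then have "- msum r n \<le> k \<and> k \<le> msum r n"
        using PhiP_supp[OF P, of k] EF(1) unfolding suppin_def by fastforce
      moreover have "k \<noteq> - msum r n"
        using k EF(3) unfolding alpha_def PH_def by auto
      ultimately show "- msum r ?m \<le> k \<and> k \<le> msum r n" using sm by auto
    qed
    show "?W (msum r n) = 1" using PhiP_top[OF P] EF(4) by simp
    show "orthc r mom n ?m ?W"
      unfolding orthc_def
    proof (intro allI impI)
      fix i k assume i: "i < r" and k: "- ?m i \<le> k \<and> k \<le> n i - 1"
      have k1: "- n i \<le> k" using k by (auto simp: msub_at split: if_splits)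
      have "LL mom i (PH n) (- k) = 0" using PhiP_orth[OF P i k1] k by simp
      moreover have "LL mom i (EE n j) (- k) = 0"
        by (rule EE_orth[OF n j nj i k1]) (use k in \<open>auto simp: msub_at\<close>)
      ultimately show "LL mom i ?W (- k) = 0" using PhiP_fin[OF P] EF(2) by simp
    qed
  qed
  moreover have "\<not> (\<forall>i<r. n i = - ?m i)"
  proof -
    have "n j \<noteq> - ?m j" using nj by (simp add: msub_at)
    then show ?thesis using j by blast
  qed
  ultimately show ?thesis using Phi_char[OF KER_down[OF n j nj]] by blast
qed

end

context mosys begin

definition dd :: "(nat \<Rightarrow> int) \<Rightarrow> nat \<Rightarrow> complex" where
  "dd n l = PH n (msum r n - 1) - UU n l (msum r n)"
definition cc :: "(nat \<Rightarrow> int) \<Rightarrow> nat \<Rightarrow> complex" where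
  "cc n i = LL mom i (PH n) (n i + 1) / YY n i"

lemma Iset_iff: "i \<in> Iset n \<longleftrightarrow> i < r \<and> 1 \<le> n i"
  unfolding Iset_def by simp

lemma fin_EE: "nn n \<Longrightarrow> i \<in> Iset n \<Longrightarrow> fin (EE n i)"
  using EE_PhiP_facts(2) unfolding Iset_def by blast

lemma EE_out: "nn n \<Longrightarrow> i \<in> Iset n \<Longrightarrow> k < - msum r n \<or> msum r n - 1 < k \<Longrightarrow> EE n i k = 0"
  using EE_PhiP_facts(1)[of n i] unfolding Iset_def suppin_def by force

lemma LL_EE_sel: assumes n: "nn n" and i: "i < r" and k: "- n i \<le> k" "k \<le> n i - 1" and i': "i' \<in> Iset n"
  shows "LL mom i (EE n i') (- k) = (if i' = i \<and> k = - n i then YY n i else 0)"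
proof (cases "i' = i \<and> k = - n i")
  case True then show ?thesis using EE_Y[OF n, of i] i' unfolding Iset_def by auto
next
  case False then show ?thesis using EE_orth[OF n _ _ i k] i' unfolding Iset_def by auto
qed

lemma D_eq: assumes n: "nn n" and l: "l < r"
  shows "(\<lambda>k. lshift (PH n) 1 k - UU n l k) = (\<lambda>k. dd n l * PH n k + (\<Sum>i\<in>Iset n. cc n i * EE n i k))"
proof -
  let ?N = "msum r n"
  let ?I = "Iset n"
  let ?R = "\<lambda>k. (lshift (PH n) 1 k - UU n l k) - (dd n l * PH n k + (\<Sum>i\<in>?I. cc n i * EE n i k))"
  have P: "PhiP r mom n n (PH n)" by (rule PH_PhiP[OF n])
  have U: "PhiP r mom (madd n (unitv l)) n (UU n l)" by (rule UU_PhiP[OF n l])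
  have sU: "msum r (madd n (unitv l)) = ?N + 1" by (rule msum_madd[OF l])
  have fP: "fin (PH n)" by (rule PhiP_fin[OF P])
  have fU: "fin (UU n l)" by (rule PhiP_fin[OF U])
  have fE: "\<And>i. i \<in> ?I \<Longrightarrow> fin (EE n i)" by (rule fin_EE[OF n])
  have sR: "suppin ?R (- ?N) (?N - 1)"
    unfolding suppin_def
  proof (intro allI impI)
    fix k assume k: "?R k \<noteq> 0"
    have Eout: "\<And>i. i \<in> ?I \<Longrightarrow> k < - ?N \<or> ?N - 1 < k \<Longrightarrow> EE n i k = 0" using EE_out[OF n] by blast
    show "- ?N \<le> k \<and> k \<le> ?N - 1"
    proof (rule ccontr)
      assume out: "\<not> (- ?N \<le> k \<and> k \<le> ?N - 1)"
      then have E0: "(\<Sum>i\<in>?I. cc n i * EE n i k) = 0" using Eout by auto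
      consider "k < - ?N" | "k = ?N" | "k = ?N + 1" | "?N + 1 < k" using out by linarith
      then have "?R k = 0"
      proof cases
        case 1
        then show ?thesis using E0 PhiP_out[OF P, of k] PhiP_out[OF P, of "k - 1"] PhiP_out[OF U, of k]
          by (simp add: lshift_def)
      next
        case 2
        then show ?thesis using E0 PhiP_top[OF P] by (simp add: lshift_def dd_def)
      next
        case 3
        then show ?thesis using E0 PhiP_top[OF P] PhiP_top[OF U] PhiP_out[OF P, of k] sU
          by (simp add: lshift_def)
      next
        case 4
        then show ?thesis using E0 PhiP_out[OF P, of k] PhiP_out[OF P, of "k - 1"] PhiP_out[OF U, of k] sU
          by (simp add: lshift_def)
      qed
      then show False using k by simp
    qed
  qed
  have oR: "orthc r mom n n ?R"
    unfolding orthc_def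
  proof (intro allI impI)
    fix i k assume i: "i < r" and k: "- n i \<le> k \<and> k \<le> n i - 1"
    have e1: "LL mom i ?R (- k) = (LL mom i (PH n) (- k + 1) - LL mom i (UU n l) (- k))
       - (dd n l * LL mom i (PH n) (- k) + (\<Sum>i'\<in>?I. cc n i' * LL mom i (EE n i') (- k)))"
      using fP fU fE finite_Iset by (simp add: LL_lshift)
    have u0: "LL mom i (UU n l) (- k) = 0"
      by (rule PhiP_orth[OF U i]) (use k in \<open>auto simp: madd_at\<close>)
    have p0: "LL mom i (PH n) (- k) = 0" using PhiP_orth[OF P i] k by simp
    have sel: "(\<Sum>i'\<in>?I. cc n i' * LL mom i (EE n i') (- k))
               = (\<Sum>i'\<in>?I. if i' = i then (if k = - n i then cc n i * YY n i else 0) else 0)"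
      by (rule sum.cong) (use LL_EE_sel[OF n i] k in auto)
    show "LL mom i ?R (- k) = 0"
    proof (cases "k = - n i")
      case False
      have "LL mom i (PH n) (- (k - 1)) = 0" using PhiP_orth[OF P i, of "k - 1"] k False by simp
      then show ?thesis using e1 u0 p0 sel False by simp
    next
      case True
      then have iI: "i \<in> ?I" using k i unfolding Iset_def by auto
      have Y: "YY n i \<noteq> 0" using YY_nz[OF n] iI unfolding Iset_def by auto
      have "(\<Sum>i'\<in>?I. cc n i' * LL mom i (EE n i') (- k)) = cc n i * YY n i"
        using sel True iI finite_Iset by simp
      also have "\<dots> = LL mom i (PH n) (n i + 1)" using Y unfolding cc_def by simp
      finally show ?thesis using e1 u0 p0 True by (simp add: add.commute)
    qed
  qed
  have "?R = (\<lambda>_. 0)" using KER_nn[OF n] sR oR unfolding KER_def by blast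
  then show ?thesis by (simp add: fun_eq_iff)
qed


lemma R4gen: assumes n: "nn n" and sQ: "suppin Q (- msum r n) (msum r n)"
  and oQ: "\<And>i k. i < r \<Longrightarrow> - n i + 1 \<le> k \<Longrightarrow> k \<le> n i - 1 \<Longrightarrow> LL mom i Q (- k) = 0"
  shows "Q (msum r n) - (\<Sum>l\<in>Iset n. LL mom l Q (- n l) / YY n l) = Q (- msum r n) * alpha r mom n n"
proof -
  let ?N = "msum r n"
  let ?I = "Iset n"
  define lam where "lam = (\<lambda>l. LL mom l Q (- n l) / YY n l)"
  let ?lam = "lam"
  let ?H = "\<lambda>k. (Q k - (\<Sum>l\<in>?I. ?lam l * lshift (GG n l) 1 k)) - Q (- ?N) * lrefl (PH n) k"
  have P: "PhiP r mom n n (PH n)" by (rule PH_PhiP[OF n])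
  have G: "\<And>l. l \<in> ?I \<Longrightarrow> PhiP r mom (msub n (unitv l)) n (GG n l)"
    using GG_PhiP[OF n] unfolding Iset_def by blast
  have sG: "\<And>l. l \<in> ?I \<Longrightarrow> msum r (msub n (unitv l)) = ?N - 1"
    using msum_msub unfolding Iset_def by blast
  have fP: "fin (PH n)" by (rule PhiP_fin[OF P])
  have fQ: "fin Q" by (rule suppin_fin[OF sQ])
  have fG: "\<And>l. l \<in> ?I \<Longrightarrow> fin (GG n l)" using G PhiP_fin by blast
  have fH: "fin ?H" using fP fQ fG finite_Iset by simp
  have Gout: "\<And>l k. l \<in> ?I \<Longrightarrow> k < - ?N \<or> ?N - 1 < k \<Longrightarrow> GG n l k = 0"
    using G PhiP_out sG by metis
  have sH: "suppin (lrefl ?H) (- ?N) (?N - 1)"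
    unfolding suppin_def
  proof (intro allI impI)
    fix k assume k: "lrefl ?H k \<noteq> 0"
    show "- ?N \<le> k \<and> k \<le> ?N - 1"
    proof (rule ccontr)
      assume out: "\<not> (- ?N \<le> k \<and> k \<le> ?N - 1)"
      have G0: "(\<Sum>l\<in>?I. ?lam l * lshift (GG n l) 1 (- k)) = 0"
        using Gout out by (auto simp: lshift_def intro!: sum.neutral)
      consider "k < - ?N" | "k = ?N" | "?N < k" using out by linarith
      then have "lrefl ?H k = 0"
      proof cases
        case 1
        have "Q (- k) = 0" using sQ 1 unfolding suppin_def by force
        then show ?thesis using G0 PhiP_out[OF P, of k] 1 unfolding lrefl_def by simp
      next
        case 2 then show ?thesis using G0 PhiP_top[OF P] unfolding lrefl_def by simp
      next
        case 3
        have "Q (- k) = 0" using sQ 3 unfolding suppin_def by force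
        then show ?thesis using G0 PhiP_out[OF P, of k] 3 unfolding lrefl_def by simp
      qed
      then show False using k by simp
    qed
  qed
  have oH: "orthc r mom n n (lrefl ?H)"
    unfolding orthc_def
  proof (intro allI impI)
    fix i k assume i: "i < r" and k: "- n i \<le> k \<and> k \<le> n i - 1"
    have e0: "LL mom i (lrefl ?H) (- k) = LL mom i ?H k" using LLr[OF i fH] by simp
    have e1: "LL mom i ?H k = (LL mom i Q k - (\<Sum>l\<in>?I. ?lam l * LL mom i (GG n l) (k + 1)))
        - Q (- ?N) * LL mom i (PH n) (- k)"
      using fP fQ fG finite_Iset LLr[OF i fP] by (simp add: LL_lshift)
    have p0: "LL mom i (PH n) (- k) = 0" using PhiP_orth[OF P i] k by simp
    have gsel: "\<And>l. l \<in> ?I \<Longrightarrow> LL mom i (GG n l) (k + 1) = (if l = i \<and> k = - n i then YY n i else 0)"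
    proof -
      fix l assume lI: "l \<in> ?I"
      show "LL mom i (GG n l) (k + 1) = (if l = i \<and> k = - n i then YY n i else 0)"
      proof (cases "l = i \<and> k = - n i")
        case True then show ?thesis unfolding YY_def by (simp add: add.commute)
      next
        case False
        have "LL mom i (GG n l) (- (- k - 1)) = 0"
          by (rule PhiP_orth[OF G[OF lI] i]) (use k False in \<open>auto simp: msub_at\<close>)
        then show ?thesis using False by (auto simp: add.commute)
      qed
    qed
    have sel: "(\<Sum>l\<in>?I. ?lam l * LL mom i (GG n l) (k + 1)) = (\<Sum>l\<in>?I. if l = i then (if k = - n i then ?lam i * YY n i else 0) else 0)"
      by (rule sum.cong) (use gsel in auto)
    show "LL mom i (lrefl ?H) (- k) = 0"
    proof (cases "k = - n i")
      case False
      have "LL mom i Q (- (- k)) = 0" by (rule oQ[OF i]) (use k False in auto)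
      then show ?thesis using e0 e1 p0 sel False by simp
    next
      case True
      then have iI: "i \<in> ?I" using k i unfolding Iset_def by auto
      have Y: "YY n i \<noteq> 0" using YY_nz[OF n] iI unfolding Iset_def by auto
      have "(\<Sum>l\<in>?I. ?lam l * LL mom i (GG n l) (k + 1)) = ?lam i * YY n i"
        using sel True iI finite_Iset by simp
      also have "\<dots> = LL mom i Q (- n i)" using Y unfolding lam_def by simp
      finally show ?thesis using e0 e1 p0 True by simp
    qed
  qed
  have "lrefl ?H = (\<lambda>_. 0)" using KER_nn[OF n] sH oH unfolding KER_def by blast
  then have "lrefl ?H (- ?N) = 0" by simp
  then have H0: "?H ?N = 0" unfolding lrefl_def by simp
  have "(\<Sum>l\<in>?I. ?lam l * lshift (GG n l) 1 ?N) = (\<Sum>l\<in>?I. ?lam l)"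
  proof (rule sum.cong)
    fix l assume lI: "l \<in> ?I"
    have "GG n l (?N - 1) = 1" using PhiP_top[OF G[OF lI]] sG[OF lI] by simp
    then show "?lam l * lshift (GG n l) 1 ?N = ?lam l" by (simp add: lshift_def)
  qed simp
  then show ?thesis using H0 unfolding lrefl_def alpha_def PH_def lam_def by (simp add: algebra_simps)
qed

end

context mosys begin

lemma U_rel: assumes n: "nn n" and l: "l < r" and j: "j < r"
  shows "UU n l = (\<lambda>k. UU n j k + (dd n j - dd n l) * PH n k)"
proof
  fix k
  have a: "lshift (PH n) 1 k - UU n l k = dd n l * PH n k + (\<Sum>i\<in>Iset n. cc n i * EE n i k)"
    using fun_cong[OF D_eq[OF n l], of k] by simp
  have b: "lshift (PH n) 1 k - UU n j k = dd n j * PH n k + (\<Sum>i\<in>Iset n. cc n i * EE n i k)"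
    using fun_cong[OF D_eq[OF n j], of k] by simp
  show "UU n l k = UU n j k + (dd n j - dd n l) * PH n k"
    using a b by (simp add: algebra_simps)
qed

lemma gamma_eq: assumes n: "nn n" and l: "l < r" and j: "j < r"
  shows "gamma r mom n n l j = dd n j - dd n l"
proof -
  have P: "PhiP r mom n n (PH n)" by (rule PH_PhiP[OF n])
  have U: "PhiP r mom (madd n (unitv j)) n (UU n j)" by (rule UU_PhiP[OF n j])
  have fP: "fin (PH n)" by (rule PhiP_fin[OF P])
  have fU: "fin (UU n j)" by (rule PhiP_fin[OF U])
  have u0: "LL mom j (UU n j) (- n j) = 0"
    by (rule PhiP_orth[OF U j]) (use n j in \<open>auto simp: madd_at nn_def\<close>)
  have Z: "ZZ n j \<noteq> 0" using Znz[OF n j] unfolding ZZ_def PH_def .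
  have "LL mom j (UU n l) (- n j) = (dd n j - dd n l) * ZZ n j"
    using U_rel[OF n l j] fP fU u0 unfolding ZZ_def by simp
  then show ?thesis using Z unfolding gamma_def LL_def[symmetric] ZZ_def UU_def[symmetric] PH_def[symmetric]
    by simp
qed

lemma S4: assumes n: "nn n" and j: "j < r"
  shows "- alpha r mom (madd n (unitv j)) n = dd n j * alpha r mom n n + (\<Sum>i\<in>Iset n. cc n i)"
proof -
  let ?N = "msum r n"
  have P: "PhiP r mom n n (PH n)" by (rule PH_PhiP[OF n])
  have "lshift (PH n) 1 (- ?N) - UU n j (- ?N) = dd n j * PH n (- ?N) + (\<Sum>i\<in>Iset n. cc n i * EE n i (- ?N))"
    using fun_cong[OF D_eq[OF n j], of "- ?N"] by simp
  moreover have "lshift (PH n) 1 (- ?N) = 0" using PhiP_out[OF P, of "- ?N - 1"] by (simp add: lshift_def)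
  moreover have "(\<Sum>i\<in>Iset n. cc n i * EE n i (- ?N)) = (\<Sum>i\<in>Iset n. cc n i)"
    by (rule sum.cong) (use EE_PhiP_facts(3)[OF n] in \<open>auto simp: Iset_def\<close>)
  ultimately show ?thesis unfolding alpha_def UU_def PH_def by simp
qed

lemma S5: assumes n: "nn n" and lI: "l \<in> Iset n"
  shows "dd n l * ZZ n l = - (\<Sum>i\<in>Iset n. cc n i * LL mom l (EE n i) (- n l))"
proof -
  have l: "l < r" and nl: "1 \<le> n l" using lI unfolding Iset_def by auto
  have P: "PhiP r mom n n (PH n)" by (rule PH_PhiP[OF n])
  have U: "PhiP r mom (madd n (unitv l)) n (UU n l)" by (rule UU_PhiP[OF n l])
  have fP: "fin (PH n)" by (rule PhiP_fin[OF P])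
  have fU: "fin (UU n l)" by (rule PhiP_fin[OF U])
  have fE: "\<And>i. i \<in> Iset n \<Longrightarrow> fin (EE n i)" by (rule fin_EE[OF n])
  have e: "LL mom l (\<lambda>k. lshift (PH n) 1 k - UU n l k) (- n l)
         = LL mom l (\<lambda>k. dd n l * PH n k + (\<Sum>i\<in>Iset n. cc n i * EE n i k)) (- n l)"
    using D_eq[OF n l] by simp
  have u0: "LL mom l (UU n l) (- n l) = 0"
    by (rule PhiP_orth[OF U l]) (use n l in \<open>auto simp: madd_at nn_def\<close>)
  have p0: "LL mom l (PH n) (- (n l - 1)) = 0"
    by (rule PhiP_orth[OF P l]) (use nl in auto)
  have "LL mom l (\<lambda>k. lshift (PH n) 1 k - UU n l k) (- n l) = 0"
    using fP fU u0 p0 by (simp add: LL_lshift)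
  moreover have "LL mom l (\<lambda>k. dd n l * PH n k + (\<Sum>i\<in>Iset n. cc n i * EE n i k)) (- n l)
     = dd n l * ZZ n l + (\<Sum>i\<in>Iset n. cc n i * LL mom l (EE n i) (- n l))"
    using fP fE finite_Iset unfolding ZZ_def by simp
  ultimately show ?thesis using e by (simp add: algebra_simps eq_neg_iff_add_eq_0)
qed

lemma S7a: assumes n: "nn n" and iI: "i \<in> Iset n"
  shows "(\<Sum>l\<in>Iset n. LL mom l (EE n i) (- n l) / YY n l) = - alpha r mom n n"
proof -
  have i: "i < r" and ni: "1 \<le> n i" using iI unfolding Iset_def by auto
  note EF = EE_PhiP_facts[OF n i ni]
  have "EE n i (msum r n) - (\<Sum>l\<in>Iset n. LL mom l (EE n i) (- n l) / YY n l) = EE n i (- msum r n) * alpha r mom n n"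
  proof (rule R4gen[OF n])
    show "suppin (EE n i) (- msum r n) (msum r n)" using suppin_mono[OF EF(1)] by simp
    fix i' k assume a: "i' < r" "- n i' + 1 \<le> k" "k \<le> n i' - 1"
    show "LL mom i' (EE n i) (- k) = 0" by (rule EE_orth[OF n i ni a(1)]) (use a in auto)
  qed
  then have "- (\<Sum>l\<in>Iset n. LL mom l (EE n i) (- n l) / YY n l) = alpha r mom n n" using EF(3,4) by simp
  then show ?thesis by (simp add: minus_equation_iff)
qed

lemma S7b: assumes n: "nn n"
  shows "(\<Sum>l\<in>Iset n. ZZ n l / YY n l) = 1 - (alpha r mom n n)\<^sup>2"
proof -
  have P: "PhiP r mom n n (PH n)" by (rule PH_PhiP[OF n])
  have "PH n (msum r n) - (\<Sum>l\<in>Iset n. LL mom l (PH n) (- n l) / YY n l) = PH n (- msum r n) * alpha r mom n n"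
  proof (rule R4gen[OF n])
    show "suppin (PH n) (- msum r n) (msum r n)" using PhiP_suppin[OF P] .
    fix i' k assume "i' < r" "- n i' + 1 \<le> k" "k \<le> n i' - 1"
    then show "LL mom i' (PH n) (- k) = 0" using PhiP_orth[OF P] by auto
  qed
  then show ?thesis using PhiP_top[OF P] unfolding ZZ_def alpha_def PH_def
    by (simp add: power2_eq_square eq_diff_eq' algebra_simps)
qed

lemma sum_rho_d: assumes n: "nn n"
  shows "(\<Sum>l\<in>Iset n. ZZ n l / YY n l * dd n l) = alpha r mom n n * (\<Sum>i\<in>Iset n. cc n i)"
proof -
  let ?I = "Iset n"
  let ?X = "\<lambda>i l. LL mom l (EE n i) (- n l) / YY n l"
  have e1: "(\<Sum>l\<in>?I. ZZ n l / YY n l * dd n l) = (\<Sum>l\<in>?I. - (\<Sum>i\<in>?I. cc n i * ?X i l))"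
  proof (rule sum.cong)
    fix l assume lI: "l \<in> ?I"
    have "ZZ n l / YY n l * dd n l = (dd n l * ZZ n l) / YY n l" by simp
    also have "\<dots> = - (\<Sum>i\<in>?I. cc n i * LL mom l (EE n i) (- n l)) / YY n l" using S5[OF n lI] by simp
    also have "\<dots> = - (\<Sum>i\<in>?I. cc n i * ?X i l)" by (simp add: sum_divide_distrib)
    finally show "ZZ n l / YY n l * dd n l = - (\<Sum>i\<in>?I. cc n i * ?X i l)" .
  qed simp
  have e2: "(\<Sum>l\<in>?I. - (\<Sum>i\<in>?I. cc n i * ?X i l)) = - (\<Sum>l\<in>?I. \<Sum>i\<in>?I. cc n i * ?X i l)"
    by (rule sum_negf)
  have e3: "(\<Sum>l\<in>?I. \<Sum>i\<in>?I. cc n i * ?X i l) = (\<Sum>i\<in>?I. \<Sum>l\<in>?I. cc n i * ?X i l)"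
    by (rule sum.swap)
  have e4: "(\<Sum>i\<in>?I. \<Sum>l\<in>?I. cc n i * ?X i l) = (\<Sum>i\<in>?I. cc n i * (- alpha r mom n n))"
  proof (rule sum.cong)
    fix i assume iI: "i \<in> ?I"
    have "(\<Sum>l\<in>?I. cc n i * ?X i l) = cc n i * (\<Sum>l\<in>?I. ?X i l)" by (simp add: sum_distrib_left)
    then show "(\<Sum>l\<in>?I. cc n i * ?X i l) = cc n i * (- alpha r mom n n)" using S7a[OF n iI] by simp
  qed simp
  show ?thesis unfolding e1 e2 e3 e4 by (simp add: sum_distrib_left sum_negf algebra_simps)
qed

lemma rho_eq: assumes n: "nn n" and l: "l < r"
  shows "rho r mom n n l = (if l \<in> Iset n then ZZ n l / YY n l else 0)"
proof (cases "1 \<le> n l")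
  case True
  have "\<forall>i<r. 0 \<le> msub n (unitv l) i + n i" using n True unfolding nn_def by (auto simp: msub_at)
  then show ?thesis using True l unfolding rho_def Iset_def ZZ_def YY_def PH_def GG_def LL_def
    by (simp add: algebra_simps)
next
  case False
  have "\<not> (0 \<le> msub n (unitv l) l + n l)" using False by (simp add: msub_at)
  then show ?thesis using False l unfolding rho_def Iset_def by auto
qed

lemma b_sum: assumes n: "nn n" and j: "j < r"
  shows "(\<Sum>l\<in>{..<r} - {j}. rho r mom n n l * gamma r mom n n l j)
         = dd n j + alpha r mom n n * alpha r mom (madd n (unitv j)) n"
proof -
  let ?a = "alpha r mom n n"
  let ?f = "\<lambda>l. rho r mom n n l * gamma r mom n n l j"
  have fj: "?f j = 0" using gamma_eq[OF n j j] by simp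
  have "(\<Sum>l\<in>{..<r} - {j}. ?f l) = (\<Sum>l\<in>{..<r}. ?f l)"
    using fj j by (simp add: sum_diff1)
  also have "\<dots> = (\<Sum>l\<in>Iset n. ?f l)"
    by (rule sum.mono_neutral_right) (auto simp: Iset_def rho_eq[OF n])
  also have "\<dots> = (\<Sum>l\<in>Iset n. ZZ n l / YY n l * (dd n j - dd n l))"
    by (rule sum.cong) (auto simp: Iset_def rho_eq[OF n] gamma_eq[OF n _ j])
  also have "\<dots> = (\<Sum>l\<in>Iset n. dd n j * (ZZ n l / YY n l) - ZZ n l / YY n l * dd n l)"
    by (rule sum.cong) (simp_all add: right_diff_distrib)
  also have "\<dots> = dd n j * (\<Sum>l\<in>Iset n. ZZ n l / YY n l) - (\<Sum>l\<in>Iset n. ZZ n l / YY n l * dd n l)"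
    by (simp only: sum_subtractf sum_distrib_left)
  also have "\<dots> = dd n j * (1 - ?a\<^sup>2) - ?a * (\<Sum>i\<in>Iset n. cc n i)"
    using S7b[OF n] sum_rho_d[OF n] by simp
  also have "(\<Sum>i\<in>Iset n. cc n i) = - alpha r mom (madd n (unitv j)) n - dd n j * ?a"
    using S4[OF n j] by (simp add: algebra_simps)
  finally show ?thesis by (simp add: algebra_simps power2_eq_square)
qed

end

lemma x_monom: "[:0, 1:] * P * monom 1 K = (P :: complex poly) * monom 1 (Suc K)"
proof -
  have "monom (1::complex) (Suc K) = [:0, 1:] * monom 1 K" by (simp add: monom_Suc)
  then show ?thesis by (simp add: algebra_simps)
qed

lemma alg_a:
  fixes X X' a Z Z' A A' B :: complex
  assumes "X = a * X'" "X = 2 * Z / A" "X' = 2 * Z' / A'" "A \<noteq> 0" "A' \<noteq> 0" "Z' \<noteq> 0" "B \<noteq> 0"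
  shows "a = A' * B * (Z / (B * Z')) / A"
proof -
  have X'nz: "X' \<noteq> 0" using assms(3,5,6) by simp
  have "a = X / X'" using assms(1) X'nz by simp
  also have "\<dots> = (2 * Z / A) / (2 * Z' / A')" using assms(2,3) by simp
  also have "\<dots> = A' * B * (Z / (B * Z')) / A" using assms(4-7) by (simp add: field_simps)
  finally show ?thesis .
qed

context mosys begin

lemma Pm_nn: "nn m \<Longrightarrow> Pm r mom m = Pn r mom m"
  unfolding Pm_def nn_def by simp

lemma Pm_not: "\<not> nn m \<Longrightarrow> Pm r mom m = 0"
  unfolding Pm_def nn_def by auto

lemma YY_R1: assumes n: "nn n" and j: "j < r" and nj: "1 \<le> n j"
  shows "YY n j = (1 - (alpha r mom (msub n (unitv j)) n)\<^sup>2) * LL mom j (PH (msub n (unitv j))) (1 - n j)"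
proof -
  let ?m = "msub n (unitv j)"
  let ?A = "PH ?m"
  define \<beta> where "\<beta> = - LL mom j ?A (n j) / LL mom j ?A (1 - n j)"
  have G: "GG n j = (\<lambda>k. ?A k + \<beta> * lshift (lrefl ?A) (-1) k)"
    using R1[OF n j nj] unfolding \<beta>_def by blast
  have m: "nn ?m" by (rule nn_msub[OF n nj])
  have A: "PhiP r mom ?m ?m ?A" unfolding PH_def by (rule PhiP_nn[OF m])
  have fA: "fin ?A" by (rule PhiP_fin[OF A])
  have sm: "msum r ?m = msum r n - 1" by (rule msum_msub[OF j])
  have Z: "LL mom j ?A (1 - n j) \<noteq> 0" using Znz[OF m j] unfolding PH_def by (simp add: msub_at)
  have "alpha r mom ?m n = GG n j (- msum r n)" unfolding alpha_def GG_def ..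
  also have "\<dots> = ?A (- msum r n) + \<beta> * ?A (msum r n - 1)"
    unfolding G by (simp add: lshift_def lrefl_def)
  also have "\<dots> = \<beta>" using PhiP_out[OF A, of "- msum r n"] PhiP_top[OF A] sm by simp
  finally have ab: "alpha r mom ?m n = \<beta>" .
  have "YY n j = LL mom j ?A (1 - n j) + \<beta> * LL mom j (lshift (lrefl ?A) (-1)) (1 - n j)"
    unfolding YY_def G using fA by simp
  also have "LL mom j (lshift (lrefl ?A) (-1)) (1 - n j) = LL mom j ?A (n j)"
    unfolding LL_lshift using LLr[OF j fA] by simp
  also have "LL mom j ?A (n j) = - \<beta> * LL mom j ?A (1 - n j)" unfolding \<beta>_def using Z by simp
  finally show ?thesis unfolding ab by (simp add: power2_eq_square algebra_simps)
qed

lemma b_val: assumes n: "nn n" and j: "j < r" and nj: "1 \<le> n j"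
  and rc: "[:0, 1:] * Pm r mom n = Pm r mom (madd n (unitv j)) + smult bb (Pm r mom n)
                   + (\<Sum>l<r. smult (aa l) (Pm r mom (msub n (unitv l))))"
  shows "bb = dd n j + alpha r mom n (msub n (unitv j)) - alpha r mom (madd n (unitv j)) n
            - alpha r mom n n * alpha r mom (msub n (unitv j)) n"
proof -
  let ?N = "msum r n"
  let ?P = "Pn r mom n"
  let ?Pp = "Pn r mom (madd n (unitv j))"
  let ?V = "Phi r mom n (msub n (unitv j))"
  let ?U = "UU n j"
  have N1: "1 \<le> ?N"
  proof -
    have "n j \<le> ?N" unfolding msum_def using n j unfolding nn_def
      by (intro member_le_sum) auto
    then show ?thesis using nj by simp
  qed
  define M where "M = nat ?N - 1"
  have M: "nat ?N = Suc M" using N1 unfolding M_def by linarith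
  have iM: "int M = ?N - 1" using M N1 by linarith
  have np: "nn (madd n (unitv j))" by (rule nn_madd[OF n])
  have PP: "PP n ?P" using Pn_PP[OF n] by blast
  have PPp: "PP (madd n (unitv j)) ?Pp" using Pn_PP[OF np] by blast
  have dP: "degree ?P = Suc M" using PP M unfolding PP_def by simp
  have cP: "coeff ?P (Suc M) = 1" using PP dP unfolding PP_def by (metis)
  have dPp: "degree ?Pp = Suc (Suc M)" using PPp M msum_madd[OF j] N1 unfolding PP_def by simp
  have cl: "\<And>l. l < r \<Longrightarrow> coeff (Pm r mom (msub n (unitv l))) (Suc M) = 0"
  proof -
    fix l assume l: "l < r"
    show "coeff (Pm r mom (msub n (unitv l))) (Suc M) = 0"
    proof (cases "1 \<le> n l")
      case True
      have ml: "nn (msub n (unitv l))" by (rule nn_msub[OF n True])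
      have "degree (Pn r mom (msub n (unitv l))) = M"
        using Pn_PP[OF ml] msum_msub[OF l] M unfolding PP_def by simp
      then show ?thesis using Pm_nn[OF ml] by (simp add: coeff_eq_0)
    next
      case False
      then have "\<not> nn (msub n (unitv l))" using l unfolding nn_def by (auto simp: msub_at)
      then show ?thesis using Pm_not by simp
    qed
  qed
  have f1: "coeff ([:0, 1:] * Pm r mom n) (Suc M) = coeff ?P M" using Pm_nn[OF n] by simp
  have f2: "coeff (Pm r mom (madd n (unitv j)) + smult bb (Pm r mom n)
                   + (\<Sum>l<r. smult (aa l) (Pm r mom (msub n (unitv l))))) (Suc M) = coeff ?Pp (Suc M) + bb"
    using Pm_nn[OF n] Pm_nn[OF np] cP cl by (simp add: coeff_sum)
  have e: "coeff ([:0, 1:] * Pm r mom n) (Suc M) = coeff (Pm r mom (madd n (unitv j)) + smult bb (Pm r mom n)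
                   + (\<Sum>l<r. smult (aa l) (Pm r mom (msub n (unitv l))))) (Suc M)"
    by (subst rc) (rule refl)
  have bc: "coeff ?P M = coeff ?Pp (Suc M) + bb" using e f1 f2 by metis
  have V: "PhiP r mom n (msub n (unitv j)) ?V" by (rule PhiP_down[OF n j nj])
  have fV: "fin ?V" by (rule PhiP_fin[OF V])
  have smj: "msum r (msub n (unitv j)) = ?N - 1" by (rule msum_msub[OF j])
  have evP: "ev ?P = sy ?V"
  proof (rule Pn_ev[OF n refl_sy])
    show "suppin (sy ?V) (- ?N) ?N"
      by (rule suppin_sy, rule suppin_mono[OF PhiP_suppin[OF V]]) (use smj in auto)
    show "sy ?V ?N = 1" using PhiP_top[OF V] PhiP_out[OF V, of "- ?N"] smj unfolding sy_def lrefl_def by simp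
    show "Lo n (sy ?V)"
      unfolding Lo_def
    proof (intro allI impI)
      fix i t assume i: "i < r" and t: "\<bar>t\<bar> < n i"
      have "LL mom i ?V (- (- t)) = 0" by (rule PhiP_orth[OF V i]) (use t in \<open>auto simp: msub_at\<close>)
      moreover have "LL mom i ?V (- t) = 0" by (rule PhiP_orth[OF V i]) (use t in \<open>auto simp: msub_at\<close>)
      ultimately show "LL mom i (sy ?V) t = 0" using LL_sy[OF i fV] by simp
    qed
  qed
  have U: "PhiP r mom (madd n (unitv j)) n ?U" by (rule UU_PhiP[OF n j])
  have fU: "fin ?U" by (rule PhiP_fin[OF U])
  have smp: "msum r (madd n (unitv j)) = ?N + 1" by (rule msum_madd[OF j])
  have evPp: "ev ?Pp = sy ?U"
  proof (rule Pn_ev[OF np refl_sy])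
    show "suppin (sy ?U) (- msum r (madd n (unitv j))) (msum r (madd n (unitv j)))"
      by (rule suppin_sy, rule suppin_mono[OF PhiP_suppin[OF U]]) (use smp in auto)
    show "sy ?U (msum r (madd n (unitv j))) = 1"
      using PhiP_top[OF U] PhiP_out[OF U, of "- ?N - 1"] smp unfolding sy_def lrefl_def by simp
    show "Lo (madd n (unitv j)) (sy ?U)"
      unfolding Lo_def
    proof (intro allI impI)
      fix i t assume i: "i < r" and t: "\<bar>t\<bar> < madd n (unitv j) i"
      have "LL mom i ?U (- (- t)) = 0" by (rule PhiP_orth[OF U i]) (use t in \<open>auto simp: madd_at split: if_splits\<close>)
      moreover have "LL mom i ?U (- t) = 0" by (rule PhiP_orth[OF U i]) (use t in \<open>auto simp: madd_at split: if_splits\<close>)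
      ultimately show "LL mom i (sy ?U) t = 0" using LL_sy[OF i fU] by simp
    qed
  qed
  have c1: "coeff ?P M = ?V (?N - 1) + ?V (- (?N - 1))"
    using ev_coeff_sub[of ?P M] dP evP iM unfolding sy_def lrefl_def by simp
  have c2: "coeff ?Pp (Suc M) = ?U ?N + ?U (- ?N)"
    using ev_coeff_sub[of ?Pp "Suc M"] dPp evPp iM unfolding sy_def lrefl_def by simp
  have Veq: "?V = (\<lambda>k. PH n k - alpha r mom n n * EE n j k)" by (rule V_eq[OF n j nj])
  have V1: "?V (?N - 1) = PH n (?N - 1) - alpha r mom n n * alpha r mom (msub n (unitv j)) n"
    using Veq EE_PhiP_facts(5)[OF n j nj] by simp
  have aV: "alpha r mom n (msub n (unitv j)) = ?V (- (?N - 1))" unfolding alpha_def smj ..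
  have aU: "alpha r mom (madd n (unitv j)) n = ?U (- ?N)" unfolding alpha_def UU_def ..
  show ?thesis using bc c1 c2 V1 aV aU unfolding dd_def by (simp add: algebra_simps)
qed


lemma a_val: assumes n: "nn n" and j: "j < r" and nj: "1 \<le> n j"
  and rc: "[:0, 1:] * Pm r mom n = Pm r mom (madd n (unitv j)) + smult bb (Pm r mom n)
                   + (\<Sum>l<r. smult (aa l) (Pm r mom (msub n (unitv l))))"
  shows "aa j = (1 + alpha r mom (msub n (unitv j)) (msub n (unitv j)))
            * (1 - (alpha r mom (msub n (unitv j)) n)\<^sup>2) * rho r mom n n j
            / (1 + alpha r mom n n)"
proof -
  let ?m = "msub n (unitv j)"
  let ?P = "Pn r mom n"
  let ?Pp = "Pn r mom (madd n (unitv j))"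
  let ?P' = "Pn r mom ?m"
  define K where "K = nat (n j) - 1"
  have K: "nat (n j) = Suc K" using nj unfolding K_def by linarith
  have iK: "int K = n j - 1" using nj unfolding K_def by linarith
  have m: "nn ?m" by (rule nn_msub[OF n nj])
  have np: "nn (madd n (unitv j))" by (rule nn_madd[OF n])
  have MoP: "Mo n ?P" using Pn_PP[OF n] unfolding PP_def by blast
  have MoPp: "Mo (madd n (unitv j)) ?Pp" using Pn_PP[OF np] unfolding PP_def by blast
  let ?mK = "monom 1 K :: complex poly"
  have z1: "Mfun mom j (?Pp * ?mK) = 0" using MoPp j iK unfolding Mo_def by (simp add: madd_at)
  have z2: "Mfun mom j (?P * ?mK) = 0" using MoP j iK unfolding Mo_def by simp
  have zl: "\<And>l. l < r \<Longrightarrow> aa l * Mfun mom j (Pm r mom (msub n (unitv l)) * ?mK)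
              = (if l = j then aa j * Mfun mom j (?P' * ?mK) else 0)"
  proof -
    fix l assume l: "l < r"
    show "aa l * Mfun mom j (Pm r mom (msub n (unitv l)) * ?mK) = (if l = j then aa j * Mfun mom j (?P' * ?mK) else 0)"
    proof (cases "l = j")
      case True then show ?thesis using Pm_nn[OF m] by simp
    next
      case False
      show ?thesis
      proof (cases "1 \<le> n l")
        case True
        have ml: "nn (msub n (unitv l))" by (rule nn_msub[OF n True])
        have "Mo (msub n (unitv l)) (Pn r mom (msub n (unitv l)))" using Pn_PP[OF ml] unfolding PP_def by blast
        then have "Mfun mom j (Pn r mom (msub n (unitv l)) * ?mK) = 0"
          using j iK False unfolding Mo_def by (simp add: msub_at)
        then show ?thesis using Pm_nn[OF ml] False by simp
      next
        case nF: False
        then have "\<not> nn (msub n (unitv l))" using l unfolding nn_def by (auto simp: msub_at)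
        then show ?thesis using Pm_not False by (simp add: Mfun_zero)
      qed
    qed
  qed
  have "Mfun mom j ([:0, 1:] * Pm r mom n * ?mK) = Mfun mom j ((Pm r mom (madd n (unitv j)) + smult bb (Pm r mom n)
                   + (\<Sum>l<r. smult (aa l) (Pm r mom (msub n (unitv l))))) * ?mK)"
    by (subst rc) (rule refl)
  also have "\<dots> = Mfun mom j (?Pp * ?mK) + bb * Mfun mom j (?P * ?mK)
       + (\<Sum>l<r. aa l * Mfun mom j (Pm r mom (msub n (unitv l)) * ?mK))"
    using Pm_nn[OF n] Pm_nn[OF np]
    by (simp add: distrib_right sum_distrib_right Mfun_add Mfun_smult Mfun_sum)
  also have "(\<Sum>l<r. aa l * Mfun mom j (Pm r mom (msub n (unitv l)) * ?mK)) = aa j * Mfun mom j (?P' * ?mK)"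
    using zl j by simp
  finally have X: "Mfun mom j (?P * monom 1 (Suc K)) = aa j * Mfun mom j (?P' * ?mK)"
    using z1 z2 x_monom Pm_nn[OF n] by simp
  have T1: "(1 + alpha r mom n n) * Mfun mom j (?P * monom 1 (Suc K)) = 2 * ZZ n j"
    using TOPP[OF n j] K unfolding ZZ_def PH_def by simp
  have mj: "nat (?m j) = K" using K by (simp add: msub_at)
  have T2: "(1 + alpha r mom ?m ?m) * Mfun mom j (?P' * ?mK) = 2 * LL mom j (PH ?m) (1 - n j)"
    using TOPP[OF m j] mj unfolding PH_def by (simp add: msub_at)
  have Y: "YY n j = (1 - (alpha r mom ?m n)\<^sup>2) * LL mom j (PH ?m) (1 - n j)" by (rule YY_R1[OF n j nj])
  have Ynz: "YY n j \<noteq> 0" by (rule YY_nz[OF n j nj])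
  have a1: "1 + alpha r mom n n \<noteq> 0" by (rule alpha_ne[OF n])
  have a2: "1 + alpha r mom ?m ?m \<noteq> 0" by (rule alpha_ne[OF m])
  have Z': "LL mom j (PH ?m) (1 - n j) \<noteq> 0" using Znz[OF m j] unfolding PH_def by (simp add: msub_at)
  have b2: "1 - (alpha r mom ?m n)\<^sup>2 \<noteq> 0" using Y Ynz by auto
  have rho: "rho r mom n n j = ZZ n j / YY n j" using rho_eq[OF n j] nj j unfolding Iset_def by simp
  have M2: "Mfun mom j (?P' * ?mK) = 2 * LL mom j (PH ?m) (1 - n j) / (1 + alpha r mom ?m ?m)"
    using T2 a2 by (simp add: field_simps)
  have M1: "Mfun mom j (?P * monom 1 (Suc K)) = 2 * ZZ n j / (1 + alpha r mom n n)"
    using T1 a1 by (simp add: field_simps)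
  show ?thesis unfolding rho Y by (rule alg_a[OF X M1 M2 a1 a2 Z' b2])
qed

lemma main:
  assumes rec: "\<forall>n. (\<forall>i<r. 0 \<le> n i) \<longrightarrow> (\<forall>k<r.
                 [:0, 1:] * Pm r mom n = Pm r mom (madd n (unitv k)) + smult (b n k) (Pm r mom n)
                   + (\<Sum>j<r. smult (a n j) (Pm r mom (msub n (unitv j)))))"
  shows "\<forall>n. (\<forall>i<r. 0 \<le> n i) \<longrightarrow> (\<forall>j<r. n j \<ge> 1 \<longrightarrow>
    a n j = (1 + alpha r mom (msub n (unitv j)) (msub n (unitv j)))
            * (1 - (alpha r mom (msub n (unitv j)) n)\<^sup>2) * rho r mom n n j
            / (1 + alpha r mom n n)
  \<and> b n j = (\<Sum>l\<in>{..<r} - {j}. rho r mom n n l * gamma r mom n n l j)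
            + alpha r mom n (msub n (unitv j)) - alpha r mom (madd n (unitv j)) n
            - alpha r mom n n * alpha r mom (msub n (unitv j)) n
            - alpha r mom n n * alpha r mom (madd n (unitv j)) n)"
proof (intro allI impI conjI)
  fix n :: "nat \<Rightarrow> int" and j :: nat
  assume n0: "\<forall>i<r. 0 \<le> n i" and j: "j < r" and nj: "1 \<le> n j"
  have n: "nn n" using n0 unfolding nn_def .
  have rc: "[:0, 1:] * Pm r mom n = Pm r mom (madd n (unitv j)) + smult (b n j) (Pm r mom n)
                   + (\<Sum>l<r. smult (a n l) (Pm r mom (msub n (unitv l))))"
    using rec n0 j by blast
  show "a n j = (1 + alpha r mom (msub n (unitv j)) (msub n (unitv j)))
            * (1 - (alpha r mom (msub n (unitv j)) n)\<^sup>2) * rho r mom n n j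
            / (1 + alpha r mom n n)"
    by (rule a_val[OF n j nj rc])
  show "b n j = (\<Sum>l\<in>{..<r} - {j}. rho r mom n n l * gamma r mom n n l j)
            + alpha r mom n (msub n (unitv j)) - alpha r mom (madd n (unitv j)) n
            - alpha r mom n n * alpha r mom (msub n (unitv j)) n
            - alpha r mom n n * alpha r mom (madd n (unitv j)) n"
    using b_val[OF n j nj rc] b_sum[OF n j] by (simp add: algebra_simps)
qed

end

theorem theorem10p3:
  fixes r :: nat and mom :: "nat \<Rightarrow> int \<Rightarrow> complex"
    and a b :: "(nat \<Rightarrow> int) \<Rightarrow> nat \<Rightarrow> complex"
  assumes r: "r \<ge> 1"
    and sym: "\<forall>j<r. \<forall>k::nat. mom j (int k) = mom j (- int k)"
    and norm: "\<forall>n. (\<forall>i<r. 0 \<le> n i) \<longrightarrow>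
                 normal r mom n n \<and> (\<forall>j<r. normal r mom (madd n (unitv j)) n)"
    and rec: "\<forall>n. (\<forall>i<r. 0 \<le> n i) \<longrightarrow> (\<forall>k<r.
                 [:0, 1:] * Pm r mom n = Pm r mom (madd n (unitv k)) + smult (b n k) (Pm r mom n)
                   + (\<Sum>j<r. smult (a n j) (Pm r mom (msub n (unitv j)))))"
  shows "\<forall>n. (\<forall>i<r. 0 \<le> n i) \<longrightarrow> (\<forall>j<r. n j \<ge> 1 \<longrightarrow>
    a n j = (1 + alpha r mom (msub n (unitv j)) (msub n (unitv j)))
            * (1 - (alpha r mom (msub n (unitv j)) n)\<^sup>2) * rho r mom n n j
            / (1 + alpha r mom n n)
  \<and> b n j = (\<Sum>l\<in>{..<r} - {j}. rho r mom n n l * gamma r mom n n l j)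
            + alpha r mom n (msub n (unitv j)) - alpha r mom (madd n (unitv j)) n
            - alpha r mom n n * alpha r mom (msub n (unitv j)) n
            - alpha r mom n n * alpha r mom (madd n (unitv j)) n)"
  proof -
  interpret mosys r mom using r sym norm by unfold_locales
  show ?thesis by (rule main[OF rec])
qed

end
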